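(* Fix $n\in\mathbb{N}$ and consider unknown complex-valued functions $f_j$ $(0\le j\le n+1)$, $\psi_l,\varphi_l$ $(0\le l\le n)$, with the convention that $f_j,\psi_l,\varphi_l$ are zero for indices outside these ranges, and set (where $f_{n+1}\ne0$) $$a=\frac{\psi_n}{f_{n+1}},\quad b=-\frac{\varphi_n}{f_{n+1}},\quad c=2i\Big(\frac{\psi_nf_n}{f_{n+1}^2}-\frac{\psi_{n-1}}{f_{n+1}}\Big),\quad d=2i\Big(\frac{\varphi_nf_n}{f_{n+1}^2}-\frac{\varphi_{n-1}}{f_{n+1}}\Big).$$ Consider the autonomous system of ODEs in $t$ $$\dot f_j=d\psi_j-c\varphi_j+2ib\psi_{j-1}+2ia\varphi_{j-1}\ (0\le j\le n+1),$$ $$\dot\psi_l=-2cf_l+4iaf_{l-1}+2iab\psi_l-4i\psi_{l-2},\quad \dot\varphi_l=2df_l+4ibf_{l-1}-2iab\varphi_l+4i\varphi_{l-2}\ (0\le l\le n),$$ and the autonomous system of ODEs in $x$ $$f_j'=ib\psi_j+ia\varphi_j\ (0\le j\le n+1),\quad \psi_l'=2iaf_l-2i\psi_{l-1},\quad \varphi_l'=2ibf_l+2i\varphi_{l-1}\ (0\le l\le n).$$ Suppose the initial data (with $f_{n+1}\neq0$) satisfy the symmetry conditions $f_j=\overline{f_j}$ for all $j$ and $\varphi_l=-\overline{\psi_l}$ for all $l$. Then the system in $t$ has a solution defined for all $t\in\mathbb{R}$, and likewise the system in $x$ has a solution defined for all $x\in\mathbb{R}$; these solutions satisfy $f_j=\overline{f_j}$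 and $\varphi_l=-\overline{\psi_l}$ for all $t$ (respectively all $x$). *)

theory Defs
  imports "HOL-Analysis.Analysis"
begin

text \<open>State variables are sequences indexed by nat.  f is used on indices 0..n+1,
  psi and phi on 0..n; all are read as zero outside these ranges, and negative
  indices (j-1, l-2) are read as zero via shiftz.\<close>

definition cutoff :: "nat \<Rightarrow> (nat \<Rightarrow> complex) \<Rightarrow> nat \<Rightarrow> complex" where
  "cutoff m g j = (if j \<le> m then g j else 0)"

definition shiftz :: "nat \<Rightarrow> (nat \<Rightarrow> complex) \<Rightarrow> nat \<Rightarrow> complex" where
  "shiftz k g j = (if k \<le> j then g (j - k) else 0)"

definition coef_a :: "nat \<Rightarrow> (nat \<Rightarrow> complex) \<Rightarrow> (nat \<Rightarrow> complex) \<Rightarrow> (nat \<Rightarrow> complex) \<Rightarrow> complex" where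
  "coef_a n f psi phi = psi n / f (Suc n)"

definition coef_b :: "nat \<Rightarrow> (nat \<Rightarrow> complex) \<Rightarrow> (nat \<Rightarrow> complex) \<Rightarrow> (nat \<Rightarrow> complex) \<Rightarrow> complex" where
  "coef_b n f psi phi = - phi n / f (Suc n)"

definition coef_c :: "nat \<Rightarrow> (nat \<Rightarrow> complex) \<Rightarrow> (nat \<Rightarrow> complex) \<Rightarrow> (nat \<Rightarrow> complex) \<Rightarrow> complex" where
  "coef_c n f psi phi = 2 * \<i> * (psi n * f n / (f (Suc n))^2 - shiftz 1 psi n / f (Suc n))"

definition coef_d :: "nat \<Rightarrow> (nat \<Rightarrow> complex) \<Rightarrow> (nat \<Rightarrow> complex) \<Rightarrow> (nat \<Rightarrow> complex) \<Rightarrow> complex" where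
  "coef_d n f psi phi = 2 * \<i> * (phi n * f n / (f (Suc n))^2 - shiftz 1 phi n / f (Suc n))"

definition t_rhs_f :: "nat \<Rightarrow> (nat \<Rightarrow> complex) \<Rightarrow> (nat \<Rightarrow> complex) \<Rightarrow> (nat \<Rightarrow> complex) \<Rightarrow> nat \<Rightarrow> complex" where
  "t_rhs_f n f psi phi j =
     (let a = coef_a n f psi phi; b = coef_b n f psi phi;
          c = coef_c n f psi phi; d = coef_d n f psi phi;
          P = cutoff n psi; Q = cutoff n phi
      in d * P j - c * Q j + 2 * \<i> * b * shiftz 1 P j + 2 * \<i> * a * shiftz 1 Q j)"

definition t_rhs_psi :: "nat \<Rightarrow> (nat \<Rightarrow> complex) \<Rightarrow> (nat \<Rightarrow> complex) \<Rightarrow> (nat \<Rightarrow> complex) \<Rightarrow> nat \<Rightarrow> complex" where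
  "t_rhs_psi n f psi phi l =
     (let a = coef_a n f psi phi; b = coef_b n f psi phi;
          c = coef_c n f psi phi;
          F = cutoff (Suc n) f; P = cutoff n psi
      in - 2 * c * F l + 4 * \<i> * a * shiftz 1 F l + 2 * \<i> * a * b * P l - 4 * \<i> * shiftz 2 P l)"

definition t_rhs_phi :: "nat \<Rightarrow> (nat \<Rightarrow> complex) \<Rightarrow> (nat \<Rightarrow> complex) \<Rightarrow> (nat \<Rightarrow> complex) \<Rightarrow> nat \<Rightarrow> complex" where
  "t_rhs_phi n f psi phi l =
     (let a = coef_a n f psi phi; b = coef_b n f psi phi;
          d = coef_d n f psi phi;
          F = cutoff (Suc n) f; Q = cutoff n phi
      in 2 * d * F l + 4 * \<i> * b * shiftz 1 F l - 2 * \<i> * a * b * Q l + 4 * \<i> * shiftz 2 Q l)"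

definition x_rhs_f :: "nat \<Rightarrow> (nat \<Rightarrow> complex) \<Rightarrow> (nat \<Rightarrow> complex) \<Rightarrow> (nat \<Rightarrow> complex) \<Rightarrow> nat \<Rightarrow> complex" where
  "x_rhs_f n f psi phi j =
     (let a = coef_a n f psi phi; b = coef_b n f psi phi;
          P = cutoff n psi; Q = cutoff n phi
      in \<i> * b * P j + \<i> * a * Q j)"

definition x_rhs_psi :: "nat \<Rightarrow> (nat \<Rightarrow> complex) \<Rightarrow> (nat \<Rightarrow> complex) \<Rightarrow> (nat \<Rightarrow> complex) \<Rightarrow> nat \<Rightarrow> complex" where
  "x_rhs_psi n f psi phi l =
     (let a = coef_a n f psi phi;
          F = cutoff (Suc n) f; P = cutoff n psi
      in 2 * \<i> * a * F l - 2 * \<i> * shiftz 1 P l)"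

definition x_rhs_phi :: "nat \<Rightarrow> (nat \<Rightarrow> complex) \<Rightarrow> (nat \<Rightarrow> complex) \<Rightarrow> (nat \<Rightarrow> complex) \<Rightarrow> nat \<Rightarrow> complex" where
  "x_rhs_phi n f psi phi l =
     (let b = coef_b n f psi phi;
          F = cutoff (Suc n) f; Q = cutoff n phi
      in 2 * \<i> * b * F l + 2 * \<i> * shiftz 1 Q l)"

text \<open>A global solution on all of the real line with prescribed data at 0 for an
  autonomous system with right-hand sides (rf, rpsi, rphi); f_{n+1} must stay nonzero
  so that the coefficients are defined along the solution.\<close>

definition global_solution ::
  "nat \<Rightarrow> ((nat \<Rightarrow> complex) \<Rightarrow> (nat \<Rightarrow> complex) \<Rightarrow> (nat \<Rightarrow> complex) \<Rightarrow> nat \<Rightarrow> complex)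
       \<Rightarrow> ((nat \<Rightarrow> complex) \<Rightarrow> (nat \<Rightarrow> complex) \<Rightarrow> (nat \<Rightarrow> complex) \<Rightarrow> nat \<Rightarrow> complex)
       \<Rightarrow> ((nat \<Rightarrow> complex) \<Rightarrow> (nat \<Rightarrow> complex) \<Rightarrow> (nat \<Rightarrow> complex) \<Rightarrow> nat \<Rightarrow> complex)
       \<Rightarrow> (nat \<Rightarrow> complex) \<Rightarrow> (nat \<Rightarrow> complex) \<Rightarrow> (nat \<Rightarrow> complex)
       \<Rightarrow> (real \<Rightarrow> nat \<Rightarrow> complex) \<Rightarrow> (real \<Rightarrow> nat \<Rightarrow> complex) \<Rightarrow> (real \<Rightarrow> nat \<Rightarrow> complex) \<Rightarrow> bool" where
  "global_solution n rf rpsi rphi f0 psi0 phi0 F P Q \<longleftrightarrow>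
     (\<forall>j\<le>Suc n. F 0 j = f0 j) \<and> (\<forall>l\<le>n. P 0 l = psi0 l \<and> Q 0 l = phi0 l) \<and>
     (\<forall>t::real. F t (Suc n) \<noteq> 0) \<and>
     (\<forall>t::real. \<forall>j\<le>Suc n.
        ((\<lambda>s. F s j) has_vector_derivative rf (F t) (P t) (Q t) j) (at t)) \<and>
     (\<forall>t::real. \<forall>l\<le>n.
        ((\<lambda>s. P s l) has_vector_derivative rpsi (F t) (P t) (Q t) l) (at t) \<and>
        ((\<lambda>s. Q s l) has_vector_derivative rphi (F t) (P t) (Q t) l) (at t))"

end

theory Submission
  imports Defs "HOL-Computational_Algebra.Polynomial"
begin


lemma hvd_union:
  assumes "(f has_vector_derivative D) (at x within S)" "(f has_vector_derivative D) (at x within T)"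
  shows "(f has_vector_derivative D) (at x within S \<union> T)"
proof -
  let ?q = "\<lambda>y. (f y - f x - (y - x) *\<^sub>R D) /\<^sub>R norm (y - x)"
  have "(?q \<longlongrightarrow> 0) (at x within S)" "(?q \<longlongrightarrow> 0) (at x within T)"
    using assms unfolding has_vector_derivative_def has_derivative_at_within by auto
  then have "(?q \<longlongrightarrow> 0) (at x within S \<union> T)" unfolding at_within_union by (rule filterlim_sup)
  then show ?thesis unfolding has_vector_derivative_def has_derivative_at_within
    by (auto intro: bounded_linear_scaleR_left)
qed

lemma int_pow:
  assumes "0 \<le> t"
  shows "integral {0..t} (\<lambda>s::real. c * s^k) = c * t^(Suc k) / real (Suc k)"
proof -
  have "((\<lambda>s::real. c * s^k) has_integral (c * t^(Suc k) / real (Suc k) - c * 0^(Suc k) / real (Suc k))) {0..t}"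
    apply (rule fundamental_theorem_of_calculus[OF assms])
    apply (simp only: has_real_derivative_iff_has_vector_derivative[symmetric])
    apply (rule derivative_eq_intros refl | simp)+
    done
  then have "integral {0..t} (\<lambda>s::real. c * s^k) = c * t^(Suc k) / real (Suc k) - c * 0^(Suc k) / real (Suc k)"
    by (rule integral_unique)
  then show ?thesis by simp
qed

lemma lip_uniform:
  fixes G :: "'v::real_normed_vector \<Rightarrow> 'w::real_normed_vector"
  assumes u: "uniform_limit S f g F" and L: "L \<ge> 0" and lip: "\<And>x y. norm (G x - G y) \<le> L * norm (x - y)"
  shows "uniform_limit S (\<lambda>n x. G (f n x)) (\<lambda>x. G (g x)) F"
  unfolding uniform_limit_iff
proof (intro allI impI)
  fix e :: real assume e: "e > 0"
  have "e / (L + 1) > 0" using e L by simp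
  with u have ev: "\<forall>\<^sub>F n in F. \<forall>x\<in>S. dist (f n x) (g x) < e / (L+1)"
    unfolding uniform_limit_iff by blast
  show "\<forall>\<^sub>F n in F. \<forall>x\<in>S. dist (G (f n x)) (G (g x)) < e"
  proof (rule eventually_mono[OF ev], intro ballI)
    fix n x assume h: "\<forall>x\<in>S. dist (f n x) (g x) < e / (L+1)" and x: "x \<in> S"
    have "dist (G (f n x)) (G (g x)) \<le> L * dist (f n x) (g x)" using lip by (simp add: dist_norm)
    also have "\<dots> \<le> (L+1) * dist (f n x) (g x)" using L by (simp add: mult_right_mono)
    also have "\<dots> < (L+1) * (e / (L+1))" using h x L by (intro mult_strict_left_mono) auto
    also have "\<dots> = e" using L by simp
    finally show "dist (G (f n x)) (G (g x)) < e" .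
  qed
qed


lemma picard_forward:
  fixes G :: "'v::banach \<Rightarrow> 'v"
  assumes L: "L \<ge> 0" and lip: "\<And>x y. norm (G x - G y) \<le> L * norm (x - y)"
  shows "\<exists>u. u 0 = x0 \<and> (\<forall>t b. 0 \<le> t \<longrightarrow> t < b \<longrightarrow> (u has_vector_derivative G (u t)) (at t within {0..b}))"
proof -
  have contG: "continuous_on S G" for S
    unfolding continuous_on_iff
  proof (intro ballI allI impI)
    fix x and e :: real assume "e > 0"
    show "\<exists>d>0. \<forall>y\<in>S. dist y x < d \<longrightarrow> dist (G y) (G x) < e"
    proof (intro exI[of _ "e/(L+1)"] conjI ballI impI)
      show "e/(L+1) > 0" using \<open>e>0\<close> L by simp
      fix y assume "dist y x < e/(L+1)"
      have "dist (G y) (G x) \<le> L * dist y x" using lip by (simp add: dist_norm)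
      also have "\<dots> \<le> (L+1) * dist y x" using L by (simp add: mult_right_mono)
      also have "\<dots> < (L+1) * (e/(L+1))" using \<open>dist y x < e/(L+1)\<close> L by (intro mult_strict_left_mono) auto
      also have "\<dots> = e" using L by simp
      finally show "dist (G y) (G x) < e" .
    qed
  qed
  define pic :: "nat \<Rightarrow> real \<Rightarrow> 'v" where "pic = rec_nat (\<lambda>t. x0) (\<lambda>k p t. x0 + integral {0..t} (\<lambda>s. G (p s)))"
  have pic0: "pic 0 = (\<lambda>t. x0)" and picS: "\<And>k. pic (Suc k) = (\<lambda>t. x0 + integral {0..t} (\<lambda>s. G (pic k s)))"
    by (simp_all add: pic_def)
  have cont: "continuous_on {0..b} (pic k)" for k b
  proof (induction k arbitrary: b)
    case 0 then show ?case by (simp add: pic0)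
  next
    case (Suc k)
    have cG: "continuous_on {0..b} (\<lambda>s. G (pic k s))"
      using continuous_on_compose[OF Suc.IH contG] by (simp add: o_def)
    have "continuous (at x within {0..b}) (\<lambda>t. integral {0..t} (\<lambda>s. G (pic k s)))" if "x \<in> {0..b}" for x
      using integral_has_vector_derivative[OF cG that] has_vector_derivative_continuous by blast
    then have "continuous_on {0..b} (\<lambda>t. integral {0..t} (\<lambda>s. G (pic k s)))"
      by (simp add: continuous_on_eq_continuous_within)
    then show ?case unfolding picS by (intro continuous_intros)
  qed
  have intG: "(\<lambda>s. G (pic k s)) integrable_on {0..t}" for k t
    by (rule integrable_continuous_real) (use continuous_on_compose[OF cont contG] in \<open>simp add: o_def\<close>)
  define M where "M = norm (G x0)"
  have Mge: "M \<ge> 0" by (simp add: M_def)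
  have bnd: "norm (pic (Suc k) t - pic k t) \<le> M * L^k * t^(Suc k) / fact (Suc k)" if "t \<ge> 0" for k t
    using that
  proof (induction k arbitrary: t)
    case 0
    have "integral {0..t} (\<lambda>s. G x0) = t *\<^sub>R G x0" using 0 by simp
    then show ?case using 0 by (simp add: pic0 picS M_def)
  next
    case (Suc k)
    have "pic (Suc (Suc k)) t - pic (Suc k) t = integral {0..t} (\<lambda>s. G (pic (Suc k) s) - G (pic k s))"
    proof -
      have e1: "pic (Suc (Suc k)) t = x0 + integral {0..t} (\<lambda>s. G (pic (Suc k) s))"
        by (simp only: picS[of "Suc k"])
      have e2: "pic (Suc k) t = x0 + integral {0..t} (\<lambda>s. G (pic k s))"
        by (simp only: picS[of k])
      show ?thesis unfolding e1 e2 by (simp add: integral_diff[OF intG intG])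
    qed
    also have "norm \<dots> \<le> integral {0..t} (\<lambda>s. L * (M * L^k / fact (Suc k)) * s^(Suc k))"
    proof (rule integral_norm_bound_integral)
      show "(\<lambda>s. G (pic (Suc k) s) - G (pic k s)) integrable_on {0..t}" by (intro integrable_diff intG)
      show "(\<lambda>s. L * (M * L^k / fact (Suc k)) * s^(Suc k)) integrable_on {0..t}"
        by (intro integrable_continuous_real continuous_intros)
      fix s assume s: "s \<in> {0..t}"
      have "norm (G (pic (Suc k) s) - G (pic k s)) \<le> L * norm (pic (Suc k) s - pic k s)" by (rule lip)
      also have "\<dots> \<le> L * (M * L^k * s^(Suc k) / fact (Suc k))"
        using Suc.IH[of s] s L by (intro mult_left_mono) auto
      finally show "norm (G (pic (Suc k) s) - G (pic k s)) \<le> L * (M * L^k / fact (Suc k)) * s^(Suc k)"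
        by simp
    qed
    also have "\<dots> = L * (M * L^k / fact (Suc k)) * t^(Suc (Suc k)) / real (Suc (Suc k))"
      by (rule int_pow) (use Suc.prems in auto)
    also have "\<dots> = M * L^(Suc k) * t^(Suc (Suc k)) / fact (Suc (Suc k))"
      by (simp add: field_simps)
    finally show ?case .
  qed
  define d where "d i t = pic (Suc i) t - pic i t" for i t
  define u where "u t = x0 + suminf (\<lambda>i. d i t)" for t
  have pic_sum: "pic n t = x0 + (\<Sum>i<n. d i t)" for n t
    unfolding d_def using sum_lessThan_telescope[of "\<lambda>i. pic i t" n] by (simp add: pic0)
  have unif: "uniform_limit {0..b} pic u sequentially" if "b \<ge> 0" for b
  proof -
    define Mi where "Mi i = M * b * ((L * b)^i /\<^sub>R fact i)" for i
    have "uniform_limit {0..b} (\<lambda>n t. \<Sum>i<n. d i t) (\<lambda>t. suminf (\<lambda>i. d i t)) sequentially"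
    proof (rule Weierstrass_m_test)
      show "summable Mi" unfolding Mi_def by (intro summable_mult summable_exp_generic)
      fix i t assume t: "t \<in> {0..b}"
      have "norm (d i t) \<le> M * L^i * t^(Suc i) / fact (Suc i)" unfolding d_def using t bnd by auto
      also have "\<dots> \<le> M * L^i * b^(Suc i) / fact i"
      proof -
        have "t^(Suc i) \<le> b^(Suc i)" using t by (intro power_mono) auto
        then have a: "M * L^i * t^(Suc i) \<le> M * L^i * b^(Suc i)" using Mge L by (intro mult_left_mono) auto
        have "(fact i :: real) \<le> fact (Suc i)" by (rule fact_mono) auto
        have b: "0 \<le> M * L^i * b^(Suc i)" using Mge L t by auto
        have "M * L^i * t^(Suc i) / fact (Suc i) \<le> M * L^i * b^(Suc i) / fact (Suc i)"
          using a by (intro divide_right_mono) auto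
        also have "\<dots> \<le> M * L^i * b^(Suc i) / fact i"
          using b \<open>(fact i :: real) \<le> fact (Suc i)\<close> by (intro divide_left_mono) auto
        finally show ?thesis .
      qed
      also have "\<dots> = Mi i" by (simp add: Mi_def power_mult_distrib field_simps)
      finally show "norm (d i t) \<le> Mi i" .
    qed
    then have "uniform_limit {0..b} (\<lambda>n t. x0 + (\<Sum>i<n. d i t)) (\<lambda>t. x0 + suminf (\<lambda>i. d i t)) sequentially"
      by (intro uniform_limit_add uniform_limit_const)
    then show ?thesis by (simp add: pic_sum[abs_def] u_def[abs_def])
  qed
  have contu: "continuous_on {0..b} u" if "b \<ge> 0" for b
    by (rule uniform_limit_theorem[OF _ unif[OF that]]) (auto simp: cont)
  have inteq: "u t = x0 + integral {0..t} (\<lambda>s. G (u s))" if t: "t \<ge> 0" for t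
  proof -
    have ul: "uniform_limit {0..t} (\<lambda>n s. G (pic n s)) (\<lambda>s. G (u s)) sequentially"
      by (rule lip_uniform[OF unif[OF t] L lip])
    obtain I J where I: "\<And>n. ((\<lambda>s. G (pic n s)) has_integral I n) {0..t}"
      and J: "((\<lambda>s. G (u s)) has_integral J) {0..t}" and IJ: "I \<longlonglongrightarrow> J"
      by (rule uniform_limit_integral[OF ul]) (use continuous_on_compose[OF cont contG] in \<open>auto simp: o_def\<close>)
    have "(\<lambda>n. pic (Suc n) t) \<longlonglongrightarrow> x0 + J"
    proof -
      have "integral {0..t} (\<lambda>s. G (pic n s)) = I n" for n using I[of n] by (rule integral_unique)
      then show ?thesis unfolding picS using IJ by (simp add: tendsto_add)
    qed
    moreover have "(\<lambda>n. pic (Suc n) t) \<longlonglongrightarrow> u t"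
      using LIMSEQ_Suc[OF tendsto_uniform_limitI[OF unif[OF t], of t]] t by simp
    ultimately have "u t = x0 + J" using LIMSEQ_unique by blast
    then show ?thesis using J by (simp add: integral_unique)
  qed
  show ?thesis
  proof (intro exI[of _ u] conjI allI impI)
    show "u 0 = x0" using inteq[of 0] by simp
    fix t b :: real assume t: "0 \<le> t" "t < b"
    have cG: "continuous_on {0..b} (\<lambda>s. G (u s))"
      using continuous_on_compose[OF contu contG, of b] t by (simp add: o_def)
    have "((\<lambda>s. x0 + integral {0..s} (\<lambda>s. G (u s))) has_vector_derivative G (u t)) (at t within {0..b})"
      using has_vector_derivative_add[OF has_vector_derivative_const integral_has_vector_derivative[OF cG, of t]] t by simp
    then show "(u has_vector_derivative G (u t)) (at t within {0..b})"
      by (rule has_vector_derivative_transform[rotated 2]) (use t inteq in auto)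
  qed
qed




lemma picard_global:
  fixes G :: "'v::banach \<Rightarrow> 'v"
  assumes L: "L \<ge> 0" and lip: "\<And>x y. norm (G x - G y) \<le> L * norm (x - y)"
  shows "\<exists>w. w 0 = x0 \<and> (\<forall>t. (w has_vector_derivative G (w t)) (at t))"
proof -
  obtain u where u0: "u 0 = x0" and u: "\<And>t b. 0 \<le> t \<Longrightarrow> t < b \<Longrightarrow> (u has_vector_derivative G (u t)) (at t within {0..b})"
    using picard_forward[OF L lip] by blast
  have lip': "norm (- G x - - G y) \<le> L * norm (x - y)" for x y
  proof -
    have "- G x - - G y = - (G x - G y)" by simp
    then show ?thesis using lip[of x y] by (simp only: norm_minus_cancel)
  qed
  obtain v where v0: "v 0 = x0" and v: "\<And>t b. 0 \<le> t \<Longrightarrow> t < b \<Longrightarrow> (v has_vector_derivative - G (v t)) (at t within {0..b})"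
    using picard_forward[of L "\<lambda>x. - G x", OF L lip'] by blast
  define w where "w t = (if 0 \<le> t then u t else v (- t))" for t
  have vat: "(v has_vector_derivative - G (v t)) (at t)" if "t > 0" for t
  proof -
    have i: "t \<in> interior {0..t+1}" using that by simp
    have "(v has_vector_derivative - G (v t)) (at t within {0..t+1})" using v[of t "t+1"] that by simp
    then show ?thesis by (simp only: at_within_interior[OF i])
  qed
  have uat: "(u has_vector_derivative G (u t)) (at t)" if "t > 0" for t
  proof -
    have i: "t \<in> interior {0..t+1}" using that by simp
    have "(u has_vector_derivative G (u t)) (at t within {0..t+1})" using u[of t "t+1"] that by simp
    then show ?thesis by (simp only: at_within_interior[OF i])
  qed
  have neg: "((\<lambda>s::real. - s) has_vector_derivative -1) F" for F
    using has_vector_derivative_minus[OF has_vector_derivative_id] by simp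
  show ?thesis
  proof (intro exI[of _ w] conjI allI)
    show "w 0 = x0" by (simp add: w_def u0)
    fix t :: real
    consider "t > 0" | "t < 0" | "t = 0" by linarith
    then show "(w has_vector_derivative G (w t)) (at t)"
    proof cases
      case 1
      have "(u has_vector_derivative G (w t)) (at t)" using uat[OF 1] 1 by (simp add: w_def)
      then show ?thesis
        by (rule has_vector_derivative_transform_within_open[where S="{0<..}"])
           (use 1 in \<open>auto simp: w_def\<close>)
    next
      case 2
      have "((v \<circ> uminus) has_vector_derivative (-1) *\<^sub>R (- G (v (- t)))) (at t)"
        by (rule vector_diff_chain_at[OF neg]) (use vat[of "-t"] 2 in simp)
      then have "((v \<circ> uminus) has_vector_derivative G (w t)) (at t)" using 2 by (simp add: w_def)
      then show ?thesis
        by (rule has_vector_derivative_transform_within_open[where S="{..<0}"])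
           (use 2 in \<open>auto simp: w_def\<close>)
    next
      case 3
      have r: "(w has_vector_derivative G x0) (at 0 within {0..1})"
        by (rule has_vector_derivative_transform[of 0 _ _ u]) (use u[of 0 1] u0 in \<open>auto simp: w_def\<close>)
      have "((v \<circ> uminus) has_vector_derivative (-1) *\<^sub>R (- G (v (- 0)))) (at 0 within {-1..0})"
        by (rule vector_diff_chain_within[OF neg]) (use v[of 0 1] in simp)
      then have "((v \<circ> uminus) has_vector_derivative G x0) (at 0 within {-1..0})" by (simp add: v0)
      then have l: "(w has_vector_derivative G x0) (at 0 within {-1..0})"
        by (rule has_vector_derivative_transform[rotated 2]) (auto simp: w_def u0 v0)
      have "(w has_vector_derivative G x0) (at 0 within {-1..0} \<union> {0..1})" by (rule hvd_union[OF l r])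
      moreover have "{-1..0} \<union> {0..1} = {-1..(1::real)}" by auto
      moreover have i: "(0::real) \<in> interior {-1..1}" by simp
      ultimately have "(w has_vector_derivative G x0) (at 0)" by (simp only: at_within_interior[OF i])
      then show ?thesis using 3 by (simp add: w_def u0)
    qed
  qed
qed


lemma interp_bound:
  "\<exists>K. \<forall>(p::complex poly) M. degree p \<le> N \<longrightarrow> (\<forall>k\<le>N. norm (poly p (of_nat (s+k))) \<le> M)
        \<longrightarrow> (\<forall>j. norm (coeff p j) \<le> K * M)"
proof (induction N arbitrary: s)
  case 0
  show ?case
  proof (intro exI[of _ 1] allI impI)
    fix p :: "complex poly" and M j
    assume d: "degree p \<le> 0" and b: "\<forall>k\<le>0. norm (poly p (of_nat (s+k))) \<le> M"
    then obtain c where p: "p = [:c:]" by (metis degree_eq_zeroE le_zero_eq)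
    show "norm (coeff p j) \<le> 1 * M" using b p by (cases j) (auto intro: order_trans[OF norm_ge_zero])
  qed
next
  case (Suc N)
  obtain K where K: "\<And>(p::complex poly) M. degree p \<le> N \<Longrightarrow> (\<forall>k\<le>N. norm (poly p (of_nat (Suc s+k))) \<le> M)
        \<Longrightarrow> (\<forall>j. norm (coeff p j) \<le> K * M)"
    using Suc.IH[of "Suc s"] by blast
  show ?case
  proof (intro exI[of _ "(real s + 1) * K * 2 + 1"] allI impI)
    fix p :: "complex poly" and M j
    assume d: "degree p \<le> Suc N" and b: "\<forall>k\<le>Suc N. norm (poly p (of_nat (s+k))) \<le> M"
    define c :: complex where "c = of_nat s"
    define q where "q = synthetic_div p c"
    have pq: "p = [:-c, 1:] * q + [:poly p c:]" unfolding q_def by (rule synthetic_div_correct'[symmetric])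
    have M0: "0 \<le> M" using b[rule_format, of 0] norm_ge_zero order_trans by blast
    have pc: "norm (poly p c) \<le> M" using b[rule_format, of 0] by (simp add: c_def)
    have dq: "degree q \<le> N" using d unfolding q_def by (simp add: degree_synthetic_div)
    have "\<forall>k\<le>N. norm (poly q (of_nat (Suc s+k))) \<le> 2 * M"
    proof (intro allI impI)
      fix k assume k: "k \<le> N"
      have e: "poly p (of_nat (Suc s + k)) = (of_nat (Suc k)) * poly q (of_nat (Suc s + k)) + poly p c"
        by (subst pq) (simp add: c_def algebra_simps)
      have "norm (of_nat (Suc k) * poly q (of_nat (Suc s + k)) :: complex) \<le> 2 * M"
      proof -
        have "of_nat (Suc k) * poly q (of_nat (Suc s + k)) = poly p (of_nat (s + Suc k)) - poly p c"
          using e by simp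
        also have "norm \<dots> \<le> norm (poly p (of_nat (s + Suc k))) + norm (poly p c)" by (rule norm_triangle_ineq4)
        also have "\<dots> \<le> M + M" using b[rule_format, of "Suc k"] k pc by (intro add_mono) auto
        finally show ?thesis by simp
      qed
      moreover have "norm (poly q (of_nat (Suc s + k))) \<le> norm (of_nat (Suc k) * poly q (of_nat (Suc s + k)) :: complex)"
      proof -
        have "norm (of_nat (Suc k) :: complex) \<ge> 1" by (simp only: norm_of_nat)
        then show ?thesis by (metis mult_1 mult_right_mono norm_ge_zero norm_mult)
      qed
      ultimately show "norm (poly q (of_nat (Suc s+k))) \<le> 2 * M" by linarith
    qed
    from K[OF dq this] have Kq: "\<And>j. norm (coeff q j) \<le> K * (2 * M)" by blast
    have K0: "K * (2 * M) \<ge> 0" using Kq[of 0] norm_ge_zero order_trans by blast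
    have cp: "coeff p j = - c * coeff q j + (if j = 0 then 0 else coeff q (j - 1)) + (if j = 0 then poly p c else 0)"
      by (subst pq) (cases j, auto simp: coeff_pCons)
    have "norm (coeff p j) \<le> norm (c * coeff q j) + norm (if j = 0 then 0 else coeff q (j - 1)) + norm (if j = 0 then poly p c else 0)"
    proof -
      let ?a = "- c * coeff q j" and ?b = "(if j = 0 then 0 else coeff q (j - 1))" and ?d = "(if j = 0 then poly p c else 0)"
      have "norm (?a + ?b + ?d) \<le> norm (?a + ?b) + norm ?d" by (rule norm_triangle_ineq)
      also have "\<dots> \<le> norm ?a + norm ?b + norm ?d" using norm_triangle_ineq[of ?a ?b] by linarith
      also have "norm ?a = norm (c * coeff q j)" by (simp add: norm_mult)
      finally show ?thesis unfolding cp .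
    qed
    also have "\<dots> \<le> real s * (K * (2 * M)) + K * (2 * M) + M"
    proof (intro add_mono)
      show "norm (c * coeff q j) \<le> real s * (K * (2 * M))"
        unfolding c_def norm_mult norm_of_nat using Kq[of j] by (intro mult_left_mono) auto
      show "norm (if j = 0 then 0 else coeff q (j - 1)) \<le> K * (2 * M)" using Kq K0 by auto
      show "norm (if j = 0 then poly p c else 0) \<le> M" using pc M0 by auto
    qed
    also have "\<dots> = ((real s + 1) * K * 2 + 1) * M" by (simp add: algebra_simps)
    finally show "norm (coeff p j) \<le> ((real s + 1) * K * 2 + 1) * M" .
  qed
qed




lemma nat_close_eq: assumes "\<bar>real (x::nat) - real b\<bar> < 1" shows "b = x"
proof (rule ccontr)
  assume "b \<noteq> x"
  then consider "b + 1 \<le> x" | "x + 1 \<le> b" by linarith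
  then show False
  proof cases
    case 1 then have "real b + 1 \<le> real x" by (metis of_nat_1 of_nat_add of_nat_le_iff)
    then show False using assms by linarith
  next
    case 2 then have "real x + 1 \<le> real b" by (metis of_nat_1 of_nat_add of_nat_le_iff)
    then show False using assms by linarith
  qed
qed

lemma nat_close_eq2: "\<bar>real (x::nat) - real b\<bar> * 2 < 1 \<Longrightarrow> b = x"
  by (rule nat_close_eq) simp

instantiation nat :: metric_space
begin
definition dist_nat :: "nat \<Rightarrow> nat \<Rightarrow> real" where "dist_nat m n = \<bar>real m - real n\<bar>"
definition uniformity_nat :: "(nat \<times> nat) filter" where
  "uniformity_nat = (INF e\<in>{0 <..}. principal {(x, y). dist x y < e})"
instance
proof
  show "uniformity = (INF e\<in>{0 <..}. principal {(x, y::nat). dist x y < e})" by (rule uniformity_nat_def)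
  fix U :: "nat set"
  have "eventually (\<lambda>(x', y). x' = x \<longrightarrow> y \<in> U) uniformity" if "x \<in> U" for x
  proof -
    have "eventually (\<lambda>(x', y). x' = x \<longrightarrow> y \<in> U) (principal {(x, y::nat). dist x y < 1/2})"
      using that by (auto simp: eventually_principal dist_nat_def dest: nat_close_eq2)
    then show ?thesis unfolding uniformity_nat_def by (rule eventually_INF1[rotated]) simp
  qed
  then show "open U = (\<forall>x\<in>U. eventually (\<lambda>(x', y). x' = x \<longrightarrow> y \<in> U) uniformity)"
    by (simp add: open_discrete)
next
  fix x y z :: nat
  show "(dist x y = 0) = (x = y)" by (simp add: dist_nat_def)
  show "dist x y \<le> dist x z + dist y z" by (simp add: dist_nat_def)
qed
end


instance bcontfun :: (metric_space, banach) banach ..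

definition LB :: "('v::real_normed_vector \<Rightarrow> 'w::real_normed_vector) \<Rightarrow> bool" where
  "LB g \<longleftrightarrow> (\<forall>R. \<exists>L B. \<forall>u v. norm u \<le> R \<longrightarrow> norm v \<le> R \<longrightarrow> norm (g u - g v) \<le> L * norm (u - v) \<and> norm (g u) \<le> B)"

lemma LBD:
  assumes "LB g"
  obtains L B where "\<And>u v. norm u \<le> R \<Longrightarrow> norm v \<le> R \<Longrightarrow> norm (g u - g v) \<le> L * norm (u - v)"
    "\<And>u. norm u \<le> R \<Longrightarrow> norm (g u) \<le> B" "L \<ge> 0" "B \<ge> 0"
proof -
  from assms obtain L B where h: "\<And>u v. norm u \<le> R \<Longrightarrow> norm v \<le> R \<Longrightarrow> norm (g u - g v) \<le> L * norm (u - v) \<and> norm (g u) \<le> B"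
    unfolding LB_def by blast
  show ?thesis
  proof (rule that[of "max L 0" "max B 0"])
    fix u v :: 'a assume "norm u \<le> R" "norm v \<le> R"
    then have "norm (g u - g v) \<le> L * norm (u - v)" using h by blast
    also have "\<dots> \<le> max L 0 * norm (u - v)" by (intro mult_right_mono) auto
    finally show "norm (g u - g v) \<le> max L 0 * norm (u - v)" .
  next
    fix u :: 'a assume "norm u \<le> R"
    then show "norm (g u) \<le> max B 0" using h[of u u] by auto
  qed auto
qed

lemma LB_const[intro]: "LB (\<lambda>u. c)"
  unfolding LB_def by (intro allI exI[of _ 0] exI[of _ "norm c"]) auto

lemma LB_add[intro]:
  assumes "LB f" "LB g" shows "LB (\<lambda>u. f u + g u)"
  unfolding LB_def
proof
  fix R
  obtain L1 B1 where f: "\<And>u v. norm u \<le> R \<Longrightarrow> norm v \<le> R \<Longrightarrow> norm (f u - f v) \<le> L1 * norm (u - v)"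
    "\<And>u. norm u \<le> R \<Longrightarrow> norm (f u) \<le> B1" using LBD[OF assms(1)] by metis
  obtain L2 B2 where g: "\<And>u v. norm u \<le> R \<Longrightarrow> norm v \<le> R \<Longrightarrow> norm (g u - g v) \<le> L2 * norm (u - v)"
    "\<And>u. norm u \<le> R \<Longrightarrow> norm (g u) \<le> B2" using LBD[OF assms(2)] by metis
  show "\<exists>L B. \<forall>u v. norm u \<le> R \<longrightarrow> norm v \<le> R \<longrightarrow> norm (f u + g u - (f v + g v)) \<le> L * norm (u - v) \<and> norm (f u + g u) \<le> B"
  proof (rule exI[of _ "L1 + L2"], rule exI[of _ "B1 + B2"], intro allI impI conjI)
    fix u v :: 'a assume uv: "norm u \<le> R" "norm v \<le> R"
    have "norm (f u + g u - (f v + g v)) = norm ((f u - f v) + (g u - g v))" by (simp add: algebra_simps)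
    also have "\<dots> \<le> norm (f u - f v) + norm (g u - g v)" by (rule norm_triangle_ineq)
    also have "\<dots> \<le> L1 * norm (u - v) + L2 * norm (u - v)" using f(1)[OF uv] g(1)[OF uv] by linarith
    finally show "norm (f u + g u - (f v + g v)) \<le> (L1 + L2) * norm (u - v)" by (simp add: algebra_simps)
  next
    fix u v :: 'a assume uv: "norm u \<le> R" "norm v \<le> R"
    show "norm (f u + g u) \<le> B1 + B2" using f(2)[OF uv(1)] g(2)[OF uv(1)] norm_triangle_ineq[of "f u" "g u"] by linarith
  qed
qed

lemma LB_mult[intro]:
  fixes f g :: "'v::real_normed_vector \<Rightarrow> 'w::real_normed_algebra"
  assumes "LB f" "LB g" shows "LB (\<lambda>u. f u * g u)"
  unfolding LB_def
proof
  fix R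
  obtain L1 B1 where f: "\<And>u v. norm u \<le> R \<Longrightarrow> norm v \<le> R \<Longrightarrow> norm (f u - f v) \<le> L1 * norm (u - v)"
    "\<And>u. norm u \<le> R \<Longrightarrow> norm (f u) \<le> B1" "L1 \<ge> 0" "B1 \<ge> 0" using LBD[OF assms(1)] by metis
  obtain L2 B2 where g: "\<And>u v. norm u \<le> R \<Longrightarrow> norm v \<le> R \<Longrightarrow> norm (g u - g v) \<le> L2 * norm (u - v)"
    "\<And>u. norm u \<le> R \<Longrightarrow> norm (g u) \<le> B2" "L2 \<ge> 0" "B2 \<ge> 0" using LBD[OF assms(2)] by metis
  show "\<exists>L B. \<forall>u v. norm u \<le> R \<longrightarrow> norm v \<le> R \<longrightarrow> norm (f u * g u - f v * g v) \<le> L * norm (u - v) \<and> norm (f u * g u) \<le> B"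
  proof (rule exI[of _ "B1 * L2 + B2 * L1"], rule exI[of _ "B1 * B2"], intro allI impI conjI)
    fix u v :: 'v assume uv: "norm u \<le> R" "norm v \<le> R"
    have "f u * g u - f v * g v = f u * (g u - g v) + (f u - f v) * g v" by (simp add: algebra_simps)
    then have "norm (f u * g u - f v * g v) \<le> norm (f u * (g u - g v)) + norm ((f u - f v) * g v)"
      by (metis norm_triangle_ineq)
    also have "\<dots> \<le> norm (f u) * norm (g u - g v) + norm (f u - f v) * norm (g v)"
      by (intro add_mono norm_mult_ineq)
    also have "\<dots> \<le> B1 * (L2 * norm (u - v)) + (L1 * norm (u - v)) * B2"
      using f g uv by (intro add_mono mult_mono) auto
    finally show "norm (f u * g u - f v * g v) \<le> (B1 * L2 + B2 * L1) * norm (u - v)" by (simp add: algebra_simps)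
  next
    fix u v :: 'v assume uv: "norm u \<le> R" "norm v \<le> R"
    have "norm (f u * g u) \<le> norm (f u) * norm (g u)" by (rule norm_mult_ineq)
    also have "\<dots> \<le> B1 * B2" using f g uv by (intro mult_mono) auto
    finally show "norm (f u * g u) \<le> B1 * B2" .
  qed
qed

lemma LB_div_const[intro]:
  fixes f :: "'v::real_normed_vector \<Rightarrow> 'w::real_normed_field"
  assumes "LB f" shows "LB (\<lambda>u. f u / c)"
  using LB_mult[OF assms LB_const[of "1/c"]] by simp

lemma LB_power2[intro]:
  fixes f :: "'v::real_normed_vector \<Rightarrow> 'w::real_normed_algebra_1"
  assumes "LB f" shows "LB (\<lambda>u. (f u)^2)"
  using LB_mult[OF assms assms] by (simp add: power2_eq_square)

lemma LB_if[intro]: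
  assumes "LB f" "LB g" shows "LB (\<lambda>u. if b then f u else g u)"
  using assms by (cases b) auto

lemma LB_bl:
  assumes "LB f" "bounded_linear h" shows "LB (\<lambda>u. h (f u))"
  unfolding LB_def
proof
  fix R
  obtain K where K: "\<And>x. norm (h x) \<le> norm x * K" "K > 0" using bounded_linear.pos_bounded[OF assms(2)] by blast
  obtain L1 B1 where f: "\<And>u v. norm u \<le> R \<Longrightarrow> norm v \<le> R \<Longrightarrow> norm (f u - f v) \<le> L1 * norm (u - v)"
    "\<And>u. norm u \<le> R \<Longrightarrow> norm (f u) \<le> B1" "L1 \<ge> 0" "B1 \<ge> 0" using LBD[OF assms(1)] by metis
  show "\<exists>L B. \<forall>u v. norm u \<le> R \<longrightarrow> norm v \<le> R \<longrightarrow> norm (h (f u) - h (f v)) \<le> L * norm (u - v) \<and> norm (h (f u)) \<le> B"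
  proof (rule exI[of _ "L1 * K"], rule exI[of _ "B1 * K"], intro allI impI conjI)
    fix u v :: 'a assume uv: "norm u \<le> R" "norm v \<le> R"
    have "norm (h (f u) - h (f v)) = norm (h (f u - f v))" by (simp add: linear_diff[OF bounded_linear.linear[OF assms(2)]])
    also have "\<dots> \<le> norm (f u - f v) * K" by (rule K)
    also have "\<dots> \<le> (L1 * norm (u - v)) * K" using f(1)[OF uv] K by (intro mult_right_mono) auto
    finally show "norm (h (f u) - h (f v)) \<le> L1 * K * norm (u - v)" by (simp add: algebra_simps)
  next
    fix u v :: 'a assume uv: "norm u \<le> R" "norm v \<le> R"
    show "norm (h (f u)) \<le> B1 * K" using K(1)[of "f u"] f(2)[OF uv(1)] K(2) by (meson mult_right_mono less_imp_le order_trans)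
  qed
qed

lemma LB_minus[intro]:
  assumes "LB f" shows "LB (\<lambda>u. - f u)"
  using LB_bl[OF assms bounded_linear_minus[OF bounded_linear_ident]] by simp

lemma LB_diff[intro]:
  assumes "LB f" "LB g" shows "LB (\<lambda>u. f u - g u)"
  using LB_add[OF assms(1) LB_minus[OF assms(2)]] by simp

lemma LB_cnj[intro]: "LB f \<Longrightarrow> LB (\<lambda>u. cnj (f u))"
  using LB_bl[OF _ bounded_linear_cnj] by blast
lemma LB_of_real[intro]: "LB (f :: _ \<Rightarrow> real) \<Longrightarrow> LB (\<lambda>u. complex_of_real (f u))"
  using LB_bl[OF _ bounded_linear_of_real] by blast
lemma LB_Re[intro]: "LB f \<Longrightarrow> LB (\<lambda>u. Re (f u))"
  using LB_bl[OF _ bounded_linear_Re] by blast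

lemma bl_coord: "bounded_linear (\<lambda>g :: (nat \<Rightarrow>\<^sub>C 'b::real_normed_vector). apply_bcontfun g j)"
  by (rule bounded_linear_intro[where K=1]) (auto simp: norm_bounded)

lemma LB_id: "LB (\<lambda>u. u)"
  unfolding LB_def by (intro allI exI[of _ 1] exI) auto

lemma LB_fc[intro]: "LB (\<lambda>u :: (nat \<Rightarrow>\<^sub>C real) \<times> (nat \<Rightarrow>\<^sub>C complex). apply_bcontfun (fst u) j)"
  using LB_bl[OF LB_id bounded_linear_compose[OF bl_coord[of j] bounded_linear_fst]] by (simp add: o_def)
lemma LB_sc[intro]: "LB (\<lambda>u :: (nat \<Rightarrow>\<^sub>C real) \<times> (nat \<Rightarrow>\<^sub>C complex). apply_bcontfun (snd u) j)"
  using LB_bl[OF LB_id bounded_linear_compose[OF bl_coord[of j] bounded_linear_snd]] by (simp add: o_def)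


type_synonym st = "(nat \<Rightarrow>\<^sub>C real) \<times> (nat \<Rightarrow>\<^sub>C complex)"

definition mkB :: "nat \<Rightarrow> (nat \<Rightarrow> 'b::real_normed_vector) \<Rightarrow> (nat \<Rightarrow>\<^sub>C 'b)" where
  "mkB n g = Bcontfun (\<lambda>j. if j \<le> n then g j else 0)"

lemma mkB_apply[simp]: "apply_bcontfun (mkB n g) j = (if j \<le> n then g j else 0)"
proof -
  have "(\<lambda>j. if j \<le> n then g j else 0) \<in> bcontfun"
  proof (rule bcontfun_normI)
    show "continuous_on UNIV (\<lambda>j::nat. if j \<le> n then g j else 0)" by simp
    fix x :: nat
    show "norm (if x \<le> n then g x else 0) \<le> (\<Sum>i\<le>n. norm (g i))"
      using member_le_sum[of x "{..n}" "\<lambda>i. norm (g i)"] by (auto intro: sum_nonneg)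
  qed
  then show ?thesis unfolding mkB_def by (simp add: Bcontfun_inverse)
qed

definition Fv :: "nat \<Rightarrow> real \<Rightarrow> st \<Rightarrow> nat \<Rightarrow> complex" where
  "Fv n c0 u j = (if j \<le> n then complex_of_real (apply_bcontfun (fst u) j) else if j = Suc n then complex_of_real c0 else 0)"
definition Pv :: "nat \<Rightarrow> st \<Rightarrow> nat \<Rightarrow> complex" where
  "Pv n u l = (if l \<le> n then apply_bcontfun (snd u) l else 0)"
definition Qv :: "nat \<Rightarrow> st \<Rightarrow> nat \<Rightarrow> complex" where
  "Qv n u l = - cnj (Pv n u l)"

lemma LB_Fv[intro]: "LB (\<lambda>u. Fv n c0 u j)" unfolding Fv_def by (intro LB_if LB_of_real LB_fc LB_const)
lemma LB_Pv[intro]: "LB (\<lambda>u. Pv n u j)" unfolding Pv_def by (intro LB_if LB_sc LB_const)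
lemma LB_Qv[intro]: "LB (\<lambda>u. Qv n u j)" unfolding Qv_def by (intro LB_minus LB_cnj LB_Pv)
lemma Fv_Suc[simp]: "Fv n c0 u (Suc n) = complex_of_real c0" by (simp add: Fv_def)

lemma LB_fam:
  fixes g :: "'v::real_normed_vector \<Rightarrow> nat \<Rightarrow> 'w::real_normed_vector"
  assumes "\<And>j. LB (\<lambda>u. g u j)"
  shows "\<exists>L B. L \<ge> 0 \<and> B \<ge> 0 \<and> (\<forall>u v. norm u \<le> R \<longrightarrow> norm v \<le> R \<longrightarrow>
           (\<forall>j\<le>n. norm (g u j - g v j) \<le> L * norm (u - v) \<and> norm (g u j) \<le> B))"
proof (induction n)
  case 0
  obtain L B where "\<And>u v. norm u \<le> R \<Longrightarrow> norm v \<le> R \<Longrightarrow> norm (g u 0 - g v 0) \<le> L * norm (u - v)"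
    "\<And>u. norm u \<le> R \<Longrightarrow> norm (g u 0) \<le> B" "L \<ge> 0" "B \<ge> 0" using LBD[OF assms[of 0]] by metis
  then show ?case by (intro exI[of _ L] exI[of _ B]) auto
next
  case (Suc n)
  then obtain L B where LB1: "L \<ge> 0" "B \<ge> 0" "\<forall>u v. norm u \<le> R \<longrightarrow> norm v \<le> R \<longrightarrow>
           (\<forall>j\<le>n. norm (g u j - g v j) \<le> L * norm (u - v) \<and> norm (g u j) \<le> B)" by blast
  obtain L' B' where h: "\<And>u v. norm u \<le> R \<Longrightarrow> norm v \<le> R \<Longrightarrow> norm (g u (Suc n) - g v (Suc n)) \<le> L' * norm (u - v)"
    "\<And>u. norm u \<le> R \<Longrightarrow> norm (g u (Suc n)) \<le> B'" "L' \<ge> 0" "B' \<ge> 0" using LBD[OF assms[of "Suc n"]] by metis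
  show ?case
  proof (rule exI[of _ "L + L'"], rule exI[of _ "B + B'"], intro conjI allI impI)
    fix u v :: 'v and j assume uv: "norm u \<le> R" "norm v \<le> R" and j: "j \<le> Suc n"
    show "norm (g u j - g v j) \<le> (L + L') * norm (u - v)"
    proof (cases "j \<le> n")
      case True
      then have "norm (g u j - g v j) \<le> L * norm (u - v)" using LB1 uv by blast
      also have "\<dots> \<le> (L + L') * norm (u - v)" using h by (intro mult_right_mono) auto
      finally show ?thesis .
    next
      case False
      then have "j = Suc n" using j by simp
      then have "norm (g u j - g v j) \<le> L' * norm (u - v)" using h uv by blast
      also have "\<dots> \<le> (L + L') * norm (u - v)" using LB1 by (intro mult_right_mono) auto
      finally show ?thesis .
    qed
  next
    fix u v :: 'v and j assume uv: "norm u \<le> R" "norm v \<le> R" and j: "j \<le> Suc n"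
    show "norm (g u j) \<le> B + B'"
    proof (cases "j \<le> n")
      case True
      then show ?thesis using LB1 uv h by (smt (verit))
    next
      case False
      then have "j = Suc n" using j by simp
      then show ?thesis using LB1 uv h by (smt (verit))
    qed
  qed (use LB1 h in auto)
qed


type_synonym rhs = "(nat \<Rightarrow> complex) \<Rightarrow> (nat \<Rightarrow> complex) \<Rightarrow> (nat \<Rightarrow> complex) \<Rightarrow> nat \<Rightarrow> complex"

definition Gf :: "nat \<Rightarrow> real \<Rightarrow> rhs \<Rightarrow> rhs \<Rightarrow> st \<Rightarrow> st" where
  "Gf n c0 rF rP u = (mkB n (\<lambda>j. Re (rF (Fv n c0 u) (Pv n u) (Qv n u) j)), mkB n (\<lambda>l. rP (Fv n c0 u) (Pv n u) (Qv n u) l))"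

lemma LB_Gf:
  assumes LBF: "\<And>j. LB (\<lambda>u. rF (Fv n c0 u) (Pv n u) (Qv n u) j)"
    and LBP: "\<And>l. LB (\<lambda>u. rP (Fv n c0 u) (Pv n u) (Qv n u) l)"
  shows "\<exists>L B. L \<ge> 0 \<and> B \<ge> 0 \<and> (\<forall>u v. norm u \<le> R \<longrightarrow> norm v \<le> R \<longrightarrow>
     norm (Gf n c0 rF rP u - Gf n c0 rF rP v) \<le> L * norm (u - v) \<and> norm (Gf n c0 rF rP u) \<le> B)"
proof -
  obtain L1 B1 where h1: "L1 \<ge> 0" "B1 \<ge> 0" "\<forall>u v. norm u \<le> R \<longrightarrow> norm v \<le> R \<longrightarrow>
           (\<forall>j\<le>n. norm (Re (rF (Fv n c0 u) (Pv n u) (Qv n u) j) - Re (rF (Fv n c0 v) (Pv n v) (Qv n v) j)) \<le> L1 * norm (u - v)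
              \<and> norm (Re (rF (Fv n c0 u) (Pv n u) (Qv n u) j)) \<le> B1)"
    using LB_fam[of "\<lambda>u j. Re (rF (Fv n c0 u) (Pv n u) (Qv n u) j)" R n, OF LB_Re[OF LBF]]
    by (elim exE conjE) (rule that; assumption)
  obtain L2 B2 where h2: "L2 \<ge> 0" "B2 \<ge> 0" "\<forall>u v. norm u \<le> R \<longrightarrow> norm v \<le> R \<longrightarrow>
           (\<forall>j\<le>n. norm (rP (Fv n c0 u) (Pv n u) (Qv n u) j - rP (Fv n c0 v) (Pv n v) (Qv n v) j) \<le> L2 * norm (u - v)
              \<and> norm (rP (Fv n c0 u) (Pv n u) (Qv n u) j) \<le> B2)"
    using LB_fam[of "\<lambda>u j. rP (Fv n c0 u) (Pv n u) (Qv n u) j" R n, OF LBP]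
    by (elim exE conjE) (rule that; assumption)
  show ?thesis
  proof (rule exI[of _ "L1 + L2"], rule exI[of _ "B1 + B2"], intro conjI allI impI)
    fix u v :: st assume uv: "norm u \<le> R" "norm v \<le> R"
    let ?a = "fst (Gf n c0 rF rP u) - fst (Gf n c0 rF rP v)" and ?b = "snd (Gf n c0 rF rP u) - snd (Gf n c0 rF rP v)"
    have na: "norm ?a \<le> L1 * norm (u - v)"
    proof (rule norm_bound)
      fix j
      have e: "apply_bcontfun ?a j = (if j \<le> n then Re (rF (Fv n c0 u) (Pv n u) (Qv n u) j) - Re (rF (Fv n c0 v) (Pv n v) (Qv n v) j) else 0)"
        by (simp add: Gf_def)
      show "norm (apply_bcontfun ?a j) \<le> L1 * norm (u - v)"
      proof (cases "j \<le> n")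
        case True then show ?thesis unfolding e using h1(3)[rule_format, OF uv True] by simp
      next
        case False then show ?thesis unfolding e using h1(1) by simp
      qed
    qed
    have nb: "norm ?b \<le> L2 * norm (u - v)"
    proof (rule norm_bound)
      fix j
      have e: "apply_bcontfun ?b j = (if j \<le> n then rP (Fv n c0 u) (Pv n u) (Qv n u) j - rP (Fv n c0 v) (Pv n v) (Qv n v) j else 0)"
        by (simp add: Gf_def)
      show "norm (apply_bcontfun ?b j) \<le> L2 * norm (u - v)"
      proof (cases "j \<le> n")
        case True then show ?thesis unfolding e using h2(3)[rule_format, OF uv True] by simp
      next
        case False then show ?thesis unfolding e using h2(1) by simp
      qed
    qed
    have "Gf n c0 rF rP u - Gf n c0 rF rP v = (?a, ?b)" by (simp add: prod_eq_iff)
    then have "norm (Gf n c0 rF rP u - Gf n c0 rF rP v) \<le> norm ?a + norm ?b" by (metis norm_Pair_le)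
    also have "\<dots> \<le> (L1 + L2) * norm (u - v)" using na nb by (simp add: algebra_simps)
    finally show "norm (Gf n c0 rF rP u - Gf n c0 rF rP v) \<le> (L1 + L2) * norm (u - v)" .
  next
    fix u v :: st assume uv: "norm u \<le> R" "norm v \<le> R"
    have na: "norm (fst (Gf n c0 rF rP u)) \<le> B1"
    proof (rule norm_bound)
      fix j
      show "norm (apply_bcontfun (fst (Gf n c0 rF rP u)) j) \<le> B1"
      proof (cases "j \<le> n")
        case True then show ?thesis using h1(3)[rule_format, OF uv True] by (simp add: Gf_def)
      next
        case False then show ?thesis using h1(2) by (simp add: Gf_def)
      qed
    qed
    have nb: "norm (snd (Gf n c0 rF rP u)) \<le> B2"
    proof (rule norm_bound)
      fix j
      show "norm (apply_bcontfun (snd (Gf n c0 rF rP u)) j) \<le> B2"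
      proof (cases "j \<le> n")
        case True then show ?thesis using h2(3)[rule_format, OF uv True] by (simp add: Gf_def)
      next
        case False then show ?thesis using h2(2) by (simp add: Gf_def)
      qed
    qed
    have "norm (Gf n c0 rF rP u) \<le> norm (fst (Gf n c0 rF rP u)) + norm (snd (Gf n c0 rF rP u))"
      by (metis norm_Pair_le prod.collapse)
    then show "norm (Gf n c0 rF rP u) \<le> B1 + B2" using na nb by linarith
  qed (use h1 h2 in auto)
qed

definition ph :: "real \<Rightarrow> 'v::real_normed_vector \<Rightarrow> real" where
  "ph R u = max 0 (min 1 (2 - norm u / R))"

lemma clamp_lip: "\<bar>max 0 (min 1 a) - max 0 (min 1 b)\<bar> \<le> \<bar>a - b\<bar>" for a b :: real
  by (auto simp: max_def min_def abs_if)

lemma ph_lip: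
  assumes "R > 0" shows "\<bar>ph R u - ph R v\<bar> \<le> norm (u - v) / R"
proof -
  have "\<bar>ph R u - ph R v\<bar> \<le> \<bar>(2 - norm u / R) - (2 - norm v / R)\<bar>" unfolding ph_def by (rule clamp_lip)
  also have "\<dots> = \<bar>norm v - norm u\<bar> / R"
  proof -
    have e: "(2 - norm u / R) - (2 - norm v / R) = (norm v - norm u) / R" using assms by (simp add: field_simps)
    show ?thesis unfolding e using assms by (simp add: abs_divide)
  qed
  also have "\<dots> \<le> norm (u - v) / R" using assms norm_triangle_ineq3[of v u] norm_minus_commute[of v u]
    by (intro divide_right_mono) auto
  finally show ?thesis .
qed

lemma ph_bounds: "0 \<le> ph R u" "ph R u \<le> 1" by (auto simp: ph_def)
lemma ph_zero: "R > 0 \<Longrightarrow> norm u > 2 * R \<Longrightarrow> ph R u = 0"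
  by (auto simp: ph_def field_simps)
lemma ph_one: "R > 0 \<Longrightarrow> norm u \<le> R \<Longrightarrow> ph R u = 1"
  by (auto simp: ph_def field_simps)

lemma cutoff_lip:
  fixes G :: "'v::real_normed_vector \<Rightarrow> 'w::real_normed_vector"
  assumes R: "R > 0" and Lg: "Lg \<ge> 0" and Bg: "Bg \<ge> 0"
    and G: "\<And>u v. norm u \<le> 2 * R \<Longrightarrow> norm v \<le> 2 * R \<Longrightarrow> norm (G u - G v) \<le> Lg * norm (u - v) \<and> norm (G u) \<le> Bg"
  shows "norm (ph R u *\<^sub>R G u - ph R v *\<^sub>R G v) \<le> (Lg + Bg / R) * norm (u - v)"
proof -
  have one: "norm (ph R u *\<^sub>R G u - ph R v *\<^sub>R G v) \<le> (Lg + Bg / R) * norm (u - v)"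
    if u: "norm u \<le> 2 * R" for u v
  proof (cases "norm v \<le> 2 * R")
    case True
    have "ph R u *\<^sub>R G u - ph R v *\<^sub>R G v = ph R u *\<^sub>R (G u - G v) + (ph R u - ph R v) *\<^sub>R G v"
      by (simp add: algebra_simps)
    then have "norm (ph R u *\<^sub>R G u - ph R v *\<^sub>R G v) \<le> norm (ph R u *\<^sub>R (G u - G v)) + norm ((ph R u - ph R v) *\<^sub>R G v)"
      by (metis norm_triangle_ineq)
    also have "\<dots> = \<bar>ph R u\<bar> * norm (G u - G v) + \<bar>ph R u - ph R v\<bar> * norm (G v)" by simp
    also have "\<dots> \<le> 1 * (Lg * norm (u - v)) + (norm (u - v) / R) * Bg"
      using G[OF u True] G[OF True True] ph_bounds[of R u] ph_lip[OF R, of u v]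
      by (intro add_mono mult_mono) auto
    also have "\<dots> = (Lg + Bg / R) * norm (u - v)" by (simp add: algebra_simps)
    finally show ?thesis .
  next
    case False
    have "ph R v = 0" using False by (intro ph_zero[OF R]) linarith
    then have "ph R u *\<^sub>R G u - ph R v *\<^sub>R G v = (ph R u - ph R v) *\<^sub>R G u" by simp
    then have "norm (ph R u *\<^sub>R G u - ph R v *\<^sub>R G v) = \<bar>ph R u - ph R v\<bar> * norm (G u)" by simp
    also have "\<dots> \<le> (norm (u - v) / R) * Bg"
      using G[OF u u] ph_lip[OF R, of u v] by (intro mult_mono) auto
    also have "\<dots> \<le> (Lg + Bg / R) * norm (u - v)" using Lg by (simp add: algebra_simps)
    finally show ?thesis .
  qed
  show ?thesis
  proof (cases "norm u \<le> 2 * R")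
    case True then show ?thesis by (rule one)
  next
    case False
    show ?thesis
    proof (cases "norm v \<le> 2 * R")
      case True
      have "norm (ph R v *\<^sub>R G v - ph R u *\<^sub>R G u) \<le> (Lg + Bg / R) * norm (v - u)" by (rule one[OF True])
      then show ?thesis by (simp only: norm_minus_commute[of v u] norm_minus_commute[of "ph R v *\<^sub>R G v"])
    next
      case F2: False
      then show ?thesis using False ph_zero[OF R, of u] ph_zero[OF R, of v] Lg Bg R by simp
    qed
  qed
qed


definition Fpoly :: "nat \<Rightarrow> real \<Rightarrow> st \<Rightarrow> complex \<Rightarrow> complex" where
  "Fpoly n c0 u x = (\<Sum>j\<le>n. Fv n c0 u j * x^j) + complex_of_real c0 * x^Suc n"
definition Ppoly :: "nat \<Rightarrow> st \<Rightarrow> complex \<Rightarrow> complex" where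
  "Ppoly n u x = (\<Sum>l\<le>n. Pv n u l * x^l)"
definition Hen :: "nat \<Rightarrow> real \<Rightarrow> st \<Rightarrow> complex \<Rightarrow> complex" where
  "Hen n c0 u x = (Fpoly n c0 u x)^2 + Ppoly n u x * cnj (Ppoly n u x)"

lemma cnj_Fv[simp]: "cnj (Fv n c0 u j) = Fv n c0 u j" by (simp add: Fv_def)

lemma Fpoly_real: "cnj (Fpoly n c0 u (of_real x)) = Fpoly n c0 u (of_real x)"
  by (simp add: Fpoly_def cnj_sum)

lemma abs_le_sq: "\<bar>a\<bar> \<le> 1 + a^2 + b" if "b \<ge> 0" for a b :: real
proof -
  have "0 \<le> (\<bar>a\<bar> - 1)^2" by simp
  then have "0 \<le> \<bar>a\<bar>^2 + 1 - 2 * \<bar>a\<bar>" by (simp add: power2_diff)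
  moreover have "\<bar>a\<bar>^2 = a^2" by simp
  moreover have "0 \<le> a^2" by simp
  ultimately show ?thesis using that by linarith
qed

lemma Hen_bounds:
  "norm (Fpoly n c0 u (of_real x)) \<le> 1 + norm (Hen n c0 u (of_real x))"
  "norm (Ppoly n u (of_real x)) \<le> 1 + norm (Hen n c0 u (of_real x))"
proof -
  define F where "F = Fpoly n c0 u (of_real x)"
  define P where "P = Ppoly n u (of_real x)"
  have "cnj F = F" unfolding F_def by (rule Fpoly_real)
  then have "Im (cnj F) = Im F" by simp
  then have "Im F = 0" by simp
  then have FR: "F = of_real (Re F)" by (simp add: complex_eq_iff)
  have PP: "P * cnj P = of_real ((norm P)^2)" using complex_norm_square[of P] by simp
  have H: "Hen n c0 u (of_real x) = of_real ((Re F)^2 + (norm P)^2)"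
    unfolding Hen_def F_def[symmetric] P_def[symmetric] PP by (subst FR) simp
  have nH: "norm (Hen n c0 u (of_real x)) = (Re F)^2 + (norm P)^2"
    unfolding H norm_of_real by simp
  have "norm F = \<bar>Re F\<bar>" by (subst FR) (simp only: norm_of_real)
  then show "norm (Fpoly n c0 u (of_real x)) \<le> 1 + norm (Hen n c0 u (of_real x))"
    unfolding F_def[symmetric] nH using abs_le_sq[of "(norm P)^2" "Re F"] by simp
  show "norm (Ppoly n u (of_real x)) \<le> 1 + norm (Hen n c0 u (of_real x))"
    unfolding P_def[symmetric] nH using abs_le_sq[of "(Re F)^2" "norm P"] by simp
qed

lemma energy_bound:
  "\<exists>B. \<forall>u. (\<forall>k\<le>Suc n. Hen n c0 u (of_nat k) = Hen n c0 u0 (of_nat k)) \<longrightarrow>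
      (\<forall>j>n. apply_bcontfun (fst u) j = 0 \<and> apply_bcontfun (snd u) j = 0) \<longrightarrow> norm u \<le> B"
proof -
  define M where "M = 1 + (\<Sum>k\<le>Suc n. norm (Hen n c0 u0 (of_nat k)))"
  obtain K1 where K1: "\<And>(p::complex poly) M. degree p \<le> Suc n \<Longrightarrow> (\<forall>k\<le>Suc n. norm (poly p (of_nat (0+k))) \<le> M)
        \<Longrightarrow> (\<forall>j. norm (coeff p j) \<le> K1 * M)" using interp_bound[of "Suc n" 0] by blast
  obtain K2 where K2: "\<And>(p::complex poly) M. degree p \<le> n \<Longrightarrow> (\<forall>k\<le>n. norm (poly p (of_nat (0+k))) \<le> M)
        \<Longrightarrow> (\<forall>j. norm (coeff p j) \<le> K2 * M)" using interp_bound[of n 0] by blast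
  show ?thesis
  proof (rule exI[of _ "K1 * M + K2 * M"], intro allI impI)
    fix u :: st
    assume E: "\<forall>k\<le>Suc n. Hen n c0 u (of_nat k) = Hen n c0 u0 (of_nat k)"
      and Z: "\<forall>j>n. apply_bcontfun (fst u) j = 0 \<and> apply_bcontfun (snd u) j = 0"
    have HM: "1 + norm (Hen n c0 u (of_nat k)) \<le> M" if "k \<le> Suc n" for k
      using E that member_le_sum[of k "{..Suc n}" "\<lambda>k. norm (Hen n c0 u0 (of_nat k))"] by (simp add: M_def)
    have ofn: "(of_nat k :: complex) = of_real (real k)" for k by simp
    define pF where "pF = (\<Sum>j\<le>n. monom (Fv n c0 u j) j) + monom (complex_of_real c0) (Suc n)"
    define pP where "pP = (\<Sum>j\<le>n. monom (Pv n u j) j)"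
    have polyF: "poly pF x = Fpoly n c0 u x" for x
      by (simp add: pF_def Fpoly_def poly_sum poly_monom)
    have polyP: "poly pP x = Ppoly n u x" for x
      by (simp add: pP_def Ppoly_def poly_sum poly_monom)
    have degF: "degree pF \<le> Suc n" unfolding pF_def
      by (intro degree_add_le degree_sum_le) (auto intro: order_trans[OF degree_monom_le])
    have degP: "degree pP \<le> n" unfolding pP_def
      by (intro degree_sum_le) (auto intro: order_trans[OF degree_monom_le])
    have coeffF: "coeff pF j = Fv n c0 u j" if "j \<le> n" for j
      using that by (simp add: pF_def coeff_sum coeff_monom)
    have coeffP: "coeff pP j = Pv n u j" if "j \<le> n" for j
      using that by (simp add: pP_def coeff_sum coeff_monom)
    have bF: "\<forall>j. norm (coeff pF j) \<le> K1 * M"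
    proof (rule K1[OF degF], intro allI impI)
      fix k assume k: "k \<le> Suc n"
      have "norm (poly pF (of_nat (0+k))) = norm (Fpoly n c0 u (of_real (real k)))" by (simp add: polyF)
      also have "\<dots> \<le> M" using Hen_bounds(1)[of n c0 u "real k"] HM[OF k] by (simp add: ofn[symmetric])
      finally show "norm (poly pF (of_nat (0+k))) \<le> M" .
    qed
    have bP: "\<forall>j. norm (coeff pP j) \<le> K2 * M"
    proof (rule K2[OF degP], intro allI impI)
      fix k assume k: "k \<le> n"
      have "norm (poly pP (of_nat (0+k))) = norm (Ppoly n u (of_real (real k)))" by (simp add: polyP)
      also have "\<dots> \<le> M" using Hen_bounds(2)[of n u "real k" c0] HM[of k] k by (simp add: ofn[symmetric])
      finally show "norm (poly pP (of_nat (0+k))) \<le> M" .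
    qed
    have K1M: "K1 * M \<ge> 0" using bF norm_ge_zero order_trans by blast
    have K2M: "K2 * M \<ge> 0" using bP norm_ge_zero order_trans by blast
    have nf: "norm (fst u) \<le> K1 * M"
    proof (rule norm_bound)
      fix j show "norm (apply_bcontfun (fst u) j) \<le> K1 * M"
      proof (cases "j \<le> n")
        case True
        then have "norm (apply_bcontfun (fst u) j) = norm (coeff pF j)" by (simp add: coeffF Fv_def)
        then show ?thesis using bF by simp
      next
        case False then show ?thesis using Z K1M by simp
      qed
    qed
    have np: "norm (snd u) \<le> K2 * M"
    proof (rule norm_bound)
      fix j show "norm (apply_bcontfun (snd u) j) \<le> K2 * M"
      proof (cases "j \<le> n")
        case True
        then have "norm (apply_bcontfun (snd u) j) = norm (coeff pP j)" by (simp add: coeffP Pv_def)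
        then show ?thesis using bP by simp
      next
        case False then show ?thesis using Z K2M by simp
      qed
    qed
    have "norm u \<le> norm (fst u) + norm (snd u)" by (metis norm_Pair_le prod.collapse)
    then show "norm u \<le> K1 * M + K2 * M" using nf np by linarith
  qed
qed


definition dFp :: "nat \<Rightarrow> real \<Rightarrow> rhs \<Rightarrow> st \<Rightarrow> complex \<Rightarrow> complex" where
  "dFp n c0 rF u x = (\<Sum>j\<le>n. rF (Fv n c0 u) (Pv n u) (Qv n u) j * x^j)"
definition dPp :: "nat \<Rightarrow> real \<Rightarrow> rhs \<Rightarrow> st \<Rightarrow> complex \<Rightarrow> complex" where
  "dPp n c0 rP u x = (\<Sum>l\<le>n. rP (Fv n c0 u) (Pv n u) (Qv n u) l * x^l)"

lemma const_of_zero_deriv: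
  fixes f :: "real \<Rightarrow> 'a::real_normed_vector"
  assumes "\<And>t. (f has_vector_derivative 0) (at t)"
  shows "f t = f s"
proof -
  have "\<exists>c. \<forall>x\<in>UNIV. f x = c"
    by (rule has_derivative_zero_constant) (use assms in \<open>auto simp: has_vector_derivative_def\<close>)
  then show ?thesis by auto
qed

lemma real_of_cnj: assumes "cnj z = z" shows "complex_of_real (Re z) = z"
proof -
  have "Im (cnj z) = Im z" using assms by simp
  then have "Im z = 0" by simp
  then show ?thesis by (simp add: complex_eq_iff)
qed

theorem generic:
  fixes n :: nat and c0 :: real and rF rP rQ :: rhs and f0 psi0 phi0 :: "nat \<Rightarrow> complex"
  assumes LBF: "\<And>j. LB (\<lambda>u. rF (Fv n c0 u) (Pv n u) (Qv n u) j)"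
    and LBP: "\<And>l. LB (\<lambda>u. rP (Fv n c0 u) (Pv n u) (Qv n u) l)"
    and realF: "\<And>u j. cnj (rF (Fv n c0 u) (Pv n u) (Qv n u) j) = rF (Fv n c0 u) (Pv n u) (Qv n u) j"
    and symQ: "\<And>u l. rQ (Fv n c0 u) (Pv n u) (Qv n u) l = - cnj (rP (Fv n c0 u) (Pv n u) (Qv n u) l)"
    and topF: "\<And>u. rF (Fv n c0 u) (Pv n u) (Qv n u) (Suc n) = 0"
    and cons: "\<And>u x. 2 * Fpoly n c0 u (of_real x) * dFp n c0 rF u (of_real x)
        + dPp n c0 rP u (of_real x) * cnj (Ppoly n u (of_real x))
        + Ppoly n u (of_real x) * cnj (dPp n c0 rP u (of_real x)) = 0"
    and f0top: "f0 (Suc n) = complex_of_real c0"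
    and f0r: "\<forall>j\<le>Suc n. cnj (f0 j) = f0 j"
    and phi0: "\<forall>l\<le>n. phi0 l = - cnj (psi0 l)"
    and c0: "c0 \<noteq> 0"
  shows "\<exists>F P Q. global_solution n rF rP rQ f0 psi0 phi0 F P Q \<and>
            (\<forall>t. (\<forall>j\<le>Suc n. cnj (F t j) = F t j) \<and> (\<forall>l\<le>n. Q t l = - cnj (P t l)))"
proof -
  define u0 :: st where "u0 = (mkB n (\<lambda>j. Re (f0 j)), mkB n psi0)"
  define G where "G = Gf n c0 rF rP"
  obtain B where B: "\<And>u. (\<forall>k\<le>Suc n. Hen n c0 u (of_nat k) = Hen n c0 u0 (of_nat k)) \<Longrightarrow>
      (\<forall>j>n. apply_bcontfun (fst u) j = 0 \<and> apply_bcontfun (snd u) j = 0) \<Longrightarrow> norm u \<le> B"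
    using energy_bound[of n c0 u0] by blast
  define R where "R = max B 0 + 1"
  have R: "R > 0" and BR: "B < R" unfolding R_def by auto
  obtain Lg Bg where LgBg: "Lg \<ge> 0" "Bg \<ge> 0" "\<forall>u v. norm u \<le> 2*R \<longrightarrow> norm v \<le> 2*R \<longrightarrow>
        norm (G u - G v) \<le> Lg * norm (u - v) \<and> norm (G u) \<le> Bg"
    using LB_Gf[where rF=rF and rP=rP and n=n and R="2*R", OF LBF LBP] unfolding G_def by (elim exE conjE) blast
  define Gh where "Gh u = ph R u *\<^sub>R G u" for u
  have lip: "norm (Gh u - Gh v) \<le> (Lg + Bg / R) * norm (u - v)" for u v
    unfolding Gh_def by (rule cutoff_lip[OF R LgBg(1) LgBg(2)]) (use LgBg(3) in blast)
  have L0: "Lg + Bg / R \<ge> 0" using LgBg R by simp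
  obtain w where w0: "w 0 = u0" and wd: "\<And>t. (w has_vector_derivative Gh (w t)) (at t)"
    using picard_global[OF L0 lip, of u0] by blast
  let ?rF = "\<lambda>t j. rF (Fv n c0 (w t)) (Pv n (w t)) (Qv n (w t)) j"
  let ?rP = "\<lambda>t j. rP (Fv n c0 (w t)) (Pv n (w t)) (Qv n (w t)) j"
  have dfc: "((\<lambda>t. apply_bcontfun (fst (w t)) j) has_vector_derivative
      ph R (w t) * (if j \<le> n then Re (?rF t j) else 0)) (at t)" for t j
  proof -
    have "((\<lambda>t. apply_bcontfun (fst (w t)) j) has_vector_derivative apply_bcontfun (fst (Gh (w t))) j) (at t)"
      using bounded_linear.has_vector_derivative[OF bounded_linear_compose[OF bl_coord[of j] bounded_linear_fst] wd[of t]]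
      by (simp add: o_def)
    then show ?thesis by (simp add: Gh_def G_def Gf_def)
  qed
  have dsc: "((\<lambda>t. apply_bcontfun (snd (w t)) j) has_vector_derivative
      complex_of_real (ph R (w t)) * (if j \<le> n then ?rP t j else 0)) (at t)" for t j
  proof -
    have "((\<lambda>t. apply_bcontfun (snd (w t)) j) has_vector_derivative apply_bcontfun (snd (Gh (w t))) j) (at t)"
      using bounded_linear.has_vector_derivative[OF bounded_linear_compose[OF bl_coord[of j] bounded_linear_snd] wd[of t]]
      by (simp add: o_def)
    then show ?thesis by (simp add: Gh_def G_def Gf_def scaleR_conv_of_real)
  qed
  have zero_beyond: "apply_bcontfun (fst (w t)) j = 0 \<and> apply_bcontfun (snd (w t)) j = 0" if "j > n" for t j
  proof -
    have "apply_bcontfun (fst (w t)) j = apply_bcontfun (fst (w 0)) j"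
      by (rule const_of_zero_deriv) (use dfc[of j] that in simp)
    moreover have "apply_bcontfun (snd (w t)) j = apply_bcontfun (snd (w 0)) j"
      by (rule const_of_zero_deriv) (use dsc[of j] that in simp)
    ultimately show ?thesis using that by (simp add: w0 u0_def)
  qed
  have ofre: "complex_of_real (Re (?rF t j)) = ?rF t j" for t j by (rule real_of_cnj[OF realF])
  have dFpoly: "((\<lambda>t. Fpoly n c0 (w t) X) has_vector_derivative complex_of_real (ph R (w t)) * dFp n c0 rF (w t) X) (at t)" for t X
  proof -
    have e: "Fpoly n c0 (w s) X = (\<Sum>j\<le>n. complex_of_real (apply_bcontfun (fst (w s)) j) * X^j) + complex_of_real c0 * X^Suc n" for s
      by (simp add: Fpoly_def Fv_def)
    have "((\<lambda>t. (\<Sum>j\<le>n. complex_of_real (apply_bcontfun (fst (w t)) j) * X^j) + complex_of_real c0 * X^Suc n)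
        has_vector_derivative (\<Sum>j\<le>n. complex_of_real (ph R (w t) * Re (?rF t j)) * X^j) + 0) (at t)"
    proof (intro has_vector_derivative_add has_vector_derivative_const has_vector_derivative_sum has_vector_derivative_mult_left)
      fix j assume j: "j \<in> {..n}"
      have "((\<lambda>t. apply_bcontfun (fst (w t)) j) has_real_derivative ph R (w t) * Re (?rF t j)) (at t)"
        using dfc[of j t] j by (simp add: has_real_derivative_iff_has_vector_derivative)
      then show "((\<lambda>t. complex_of_real (apply_bcontfun (fst (w t)) j)) has_vector_derivative
          complex_of_real (ph R (w t) * Re (?rF t j))) (at t)"
        by (rule has_vector_derivative_of_real)
    qed
    moreover have "(\<Sum>j\<le>n. complex_of_real (ph R (w t) * Re (?rF t j)) * X^j) + 0 = complex_of_real (ph R (w t)) * dFp n c0 rF (w t) X"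
      by (simp add: dFp_def sum_distrib_left ofre mult.assoc)
    ultimately show ?thesis unfolding e by simp
  qed
  have dPpoly: "((\<lambda>t. Ppoly n (w t) X) has_vector_derivative complex_of_real (ph R (w t)) * dPp n c0 rP (w t) X) (at t)" for t X
  proof -
    have e: "Ppoly n (w s) X = (\<Sum>j\<le>n. apply_bcontfun (snd (w s)) j * X^j)" for s
      by (simp add: Ppoly_def Pv_def)
    have "((\<lambda>t. (\<Sum>j\<le>n. apply_bcontfun (snd (w t)) j * X^j))
        has_vector_derivative (\<Sum>j\<le>n. complex_of_real (ph R (w t)) * ?rP t j * X^j)) (at t)"
    proof (intro has_vector_derivative_sum has_vector_derivative_mult_left)
      fix j assume j: "j \<in> {..n}"
      then show "((\<lambda>t. apply_bcontfun (snd (w t)) j) has_vector_derivative complex_of_real (ph R (w t)) * ?rP t j) (at t)"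
        using dsc[of j t] by simp
    qed
    moreover have "(\<Sum>j\<le>n. complex_of_real (ph R (w t)) * ?rP t j * X^j) = complex_of_real (ph R (w t)) * dPp n c0 rP (w t) X"
      by (simp add: dPp_def sum_distrib_left mult.assoc)
    ultimately show ?thesis unfolding e by simp
  qed
  have Hconst: "Hen n c0 (w t) (of_real x) = Hen n c0 u0 (of_real x)" for t x
  proof -
    let ?X = "complex_of_real x"
    have "((\<lambda>t. Hen n c0 (w t) ?X) has_vector_derivative 0) (at t)" for t
    proof -
      let ?p = "complex_of_real (ph R (w t))"
      let ?F = "Fpoly n c0 (w t) ?X" and ?P = "Ppoly n (w t) ?X"
      let ?dF = "dFp n c0 rF (w t) ?X" and ?dP = "dPp n c0 rP (w t) ?X"
      have "((\<lambda>t. Fpoly n c0 (w t) ?X * Fpoly n c0 (w t) ?X + Ppoly n (w t) ?X * cnj (Ppoly n (w t) ?X)) has_vector_derivative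
          (?F * (?p * ?dF) + (?p * ?dF) * ?F) + (?P * cnj (?p * ?dP) + (?p * ?dP) * cnj ?P)) (at t)"
        by (intro has_vector_derivative_add has_vector_derivative_mult has_vector_derivative_cnj dFpoly dPpoly)
      moreover have "(?F * (?p * ?dF) + (?p * ?dF) * ?F) + (?P * cnj (?p * ?dP) + (?p * ?dP) * cnj ?P)
          = ?p * (2 * ?F * ?dF + ?dP * cnj ?P + ?P * cnj ?dP)"
        by (simp add: algebra_simps)
      moreover have "2 * ?F * ?dF + ?dP * cnj ?P + ?P * cnj ?dP = 0" by (rule cons)
      ultimately show ?thesis by (simp add: Hen_def power2_eq_square)
    qed
    then have "Hen n c0 (w t) ?X = Hen n c0 (w 0) ?X" by (rule const_of_zero_deriv)
    then show ?thesis by (simp add: w0)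
  qed
  have wB: "norm (w t) \<le> B" for t
  proof (rule B)
    show "\<forall>k\<le>Suc n. Hen n c0 (w t) (of_nat k) = Hen n c0 u0 (of_nat k)"
      using Hconst[of t "real _"] by simp
    show "\<forall>j>n. apply_bcontfun (fst (w t)) j = 0 \<and> apply_bcontfun (snd (w t)) j = 0"
      using zero_beyond by blast
  qed
  have ph1: "ph R (w t) = 1" for t by (intro ph_one[OF R]) (use wB[of t] BR in linarith)
  define F where "F t = Fv n c0 (w t)" for t
  define P where "P t = Pv n (w t)" for t
  define Q where "Q t = Qv n (w t)" for t
  show ?thesis
  proof (rule exI[of _ F], rule exI[of _ P], rule exI[of _ Q], intro conjI allI impI)
    show "global_solution n rF rP rQ f0 psi0 phi0 F P Q"
      unfolding global_solution_def
    proof (intro conjI allI impI)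
      fix j assume j: "j \<le> Suc n"
      show "F 0 j = f0 j"
      proof (cases "j \<le> n")
        case True then show ?thesis using f0r j by (simp add: F_def Fv_def w0 u0_def real_of_cnj)
      next
        case False then have "j = Suc n" using j by simp
        then show ?thesis by (simp add: F_def f0top)
      qed
    next
      fix l assume l: "l \<le> n"
      show "P 0 l = psi0 l" using l by (simp add: P_def Pv_def w0 u0_def)
      show "Q 0 l = phi0 l" using l phi0 by (simp add: Q_def Qv_def Pv_def w0 u0_def)
    next
      fix t :: real show "F t (Suc n) \<noteq> 0" using c0 by (simp add: F_def)
    next
      fix t :: real and j assume j: "j \<le> Suc n"
      show "((\<lambda>s. F s j) has_vector_derivative rF (F t) (P t) (Q t) j) (at t)"
      proof (cases "j \<le> n")
        case True
        have "((\<lambda>t. apply_bcontfun (fst (w t)) j) has_real_derivative Re (?rF t j)) (at t)"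
          using dfc[of j t] True ph1[of t] by (simp add: has_real_derivative_iff_has_vector_derivative)
        then have "((\<lambda>t. complex_of_real (apply_bcontfun (fst (w t)) j)) has_vector_derivative complex_of_real (Re (?rF t j))) (at t)"
          by (rule has_vector_derivative_of_real)
        then show ?thesis using True by (simp add: F_def P_def Q_def Fv_def ofre)
      next
        case False then have "j = Suc n" using j by simp
        then show ?thesis using topF[of "w t"] by (simp add: F_def P_def Q_def)
      qed
    next
      fix t :: real and l assume l: "l \<le> n"
      show "((\<lambda>s. P s l) has_vector_derivative rP (F t) (P t) (Q t) l) (at t)"
        using dsc[of l t] l ph1[of t] by (simp add: F_def P_def Q_def Pv_def)
      show "((\<lambda>s. Q s l) has_vector_derivative rQ (F t) (P t) (Q t) l) (at t)"
      proof -
        have "((\<lambda>s. - cnj (P s l)) has_vector_derivative - cnj (rP (F t) (P t) (Q t) l)) (at t)"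
          using dsc[of l t] l ph1[of t] by (intro has_vector_derivative_minus has_vector_derivative_cnj) (simp add: F_def P_def Q_def Pv_def)
        moreover have "(\<lambda>s. Q s l) = (\<lambda>s. - cnj (P s l))" by (simp add: Q_def Qv_def P_def)
        moreover have "rQ (F t) (P t) (Q t) l = - cnj (rP (F t) (P t) (Q t) l)"
          unfolding F_def P_def Q_def by (rule symQ)
        ultimately show ?thesis by simp
      qed
    qed
  next
    fix t :: real and j :: nat
    show "cnj (F t j) = F t j" by (simp add: F_def)
  next
    fix t :: real and l :: nat
    show "Q t l = - cnj (P t l)" by (simp add: Q_def P_def Qv_def)
  qed
qed


lemma sum_shift1: "(\<Sum>l\<le>n. shiftz 1 g l * X^l) = X * ((\<Sum>l\<le>n. g l * X^l) - g n * X^n)"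
  for X :: complex
proof (induction n)
  case 0 then show ?case by (simp add: shiftz_def)
next
  case (Suc n)
  have "(\<Sum>l\<le>Suc n. shiftz 1 g l * X^l) = X * ((\<Sum>l\<le>n. g l * X^l) - g n * X^n) + g n * X^Suc n"
    using Suc by (simp add: shiftz_def)
  also have "\<dots> = X * ((\<Sum>l\<le>Suc n. g l * X^l) - g (Suc n) * X^Suc n)" by (simp add: algebra_simps)
  finally show ?case .
qed

lemma shiftz2: "shiftz 2 g = shiftz 1 (shiftz 1 g)"
  by (auto simp: shiftz_def fun_eq_iff numeral_2_eq_2)

lemma sum_cong_le: "(\<And>l. l \<le> n \<Longrightarrow> g l = h l) \<Longrightarrow> (\<Sum>l\<le>n. g l * X^l) = (\<Sum>l\<le>n. h l * X^l)"
  by (rule sum.cong) auto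

lemma shiftz_cutoff: "l \<le> n \<Longrightarrow> shiftz k (cutoff n g) l = shiftz k g l"
  by (auto simp: shiftz_def cutoff_def)
lemma shiftz_cutoff_Suc: "l \<le> n \<Longrightarrow> shiftz k (cutoff (Suc n) g) l = shiftz k g l"
  by (auto simp: shiftz_def cutoff_def)
lemma cutoff_le: "l \<le> n \<Longrightarrow> l \<le> m \<Longrightarrow> cutoff m g l = g l"
  by (auto simp: cutoff_def)

lemma x_DF: "(\<Sum>j\<le>n. x_rhs_f n f p q j * X^j) =
   \<i> * coef_b n f p q * (\<Sum>j\<le>n. p j * X^j) + \<i> * coef_a n f p q * (\<Sum>j\<le>n. q j * X^j)"
proof -
  have "(\<Sum>j\<le>n. x_rhs_f n f p q j * X^j) = (\<Sum>j\<le>n. \<i> * coef_b n f p q * (p j * X^j) + \<i> * coef_a n f p q * (q j * X^j))"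
    by (rule sum.cong) (auto simp: x_rhs_f_def cutoff_def Let_def algebra_simps)
  also have "\<dots> = \<i> * coef_b n f p q * (\<Sum>j\<le>n. p j * X^j) + \<i> * coef_a n f p q * (\<Sum>j\<le>n. q j * X^j)"
    by (simp add: sum.distrib sum_distrib_left)
  finally show ?thesis .
qed

lemma x_DP: "(\<Sum>l\<le>n. x_rhs_psi n f p q l * X^l) =
   2 * \<i> * coef_a n f p q * (\<Sum>j\<le>n. f j * X^j) - 2 * \<i> * (X * ((\<Sum>l\<le>n. p l * X^l) - p n * X^n))"
proof -
  have "(\<Sum>l\<le>n. x_rhs_psi n f p q l * X^l) = (\<Sum>l\<le>n. 2 * \<i> * coef_a n f p q * (f l * X^l) - 2 * \<i> * (shiftz 1 p l * X^l))"
    by (rule sum.cong) (auto simp: x_rhs_psi_def cutoff_le shiftz_cutoff Let_def algebra_simps)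
  also have "\<dots> = 2 * \<i> * coef_a n f p q * (\<Sum>j\<le>n. f j * X^j) - 2 * \<i> * (\<Sum>l\<le>n. shiftz 1 p l * X^l)"
    by (simp add: sum_subtractf sum_distrib_left)
  finally show ?thesis by (simp only: sum_shift1)
qed

lemma x_DQ: "(\<Sum>l\<le>n. x_rhs_phi n f p q l * X^l) =
   2 * \<i> * coef_b n f p q * (\<Sum>j\<le>n. f j * X^j) + 2 * \<i> * (X * ((\<Sum>l\<le>n. q l * X^l) - q n * X^n))"
proof -
  have "(\<Sum>l\<le>n. x_rhs_phi n f p q l * X^l) = (\<Sum>l\<le>n. 2 * \<i> * coef_b n f p q * (f l * X^l) + 2 * \<i> * (shiftz 1 q l * X^l))"
    by (rule sum.cong) (auto simp: x_rhs_phi_def cutoff_le shiftz_cutoff Let_def algebra_simps)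
  also have "\<dots> = 2 * \<i> * coef_b n f p q * (\<Sum>j\<le>n. f j * X^j) + 2 * \<i> * (\<Sum>l\<le>n. shiftz 1 q l * X^l)"
    by (simp add: sum.distrib sum_distrib_left)
  finally show ?thesis by (simp only: sum_shift1)
qed

lemma x_identity:
  fixes f p q :: "nat \<Rightarrow> complex" and X :: complex
  assumes c: "f (Suc n) \<noteq> 0"
  shows "2 * ((\<Sum>j\<le>n. f j * X^j) + f (Suc n) * X^Suc n) * (\<Sum>j\<le>n. x_rhs_f n f p q j * X^j)
     - (\<Sum>l\<le>n. x_rhs_psi n f p q l * X^l) * (\<Sum>l\<le>n. q l * X^l)
     - (\<Sum>l\<le>n. p l * X^l) * (\<Sum>l\<le>n. x_rhs_phi n f p q l * X^l) = 0"
proof -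
  define S where "S = (\<Sum>j\<le>n. f j * X^j)"
  define Ps where "Ps = (\<Sum>j\<le>n. p j * X^j)"
  define Qs where "Qs = (\<Sum>j\<le>n. q j * X^j)"
  show ?thesis
    unfolding x_DF x_DP x_DQ S_def[symmetric] Ps_def[symmetric] Qs_def[symmetric]
    using c by (simp add: coef_a_def coef_b_def field_simps)
qed


lemma sum_shift2: "(\<Sum>l\<le>n. shiftz 2 g l * X^l) = X * (X * ((\<Sum>l\<le>n. g l * X^l) - g n * X^n) - shiftz 1 g n * X^n)"
  for X :: complex
  unfolding shiftz2 by (simp only: sum_shift1)

lemma t_DF: "(\<Sum>j\<le>n. t_rhs_f n f p q j * X^j) =
   coef_d n f p q * (\<Sum>j\<le>n. p j * X^j) - coef_c n f p q * (\<Sum>j\<le>n. q j * X^j)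
   + 2 * \<i> * coef_b n f p q * (X * ((\<Sum>l\<le>n. p l * X^l) - p n * X^n))
   + 2 * \<i> * coef_a n f p q * (X * ((\<Sum>l\<le>n. q l * X^l) - q n * X^n))"
proof -
  have "(\<Sum>j\<le>n. t_rhs_f n f p q j * X^j) = (\<Sum>j\<le>n. coef_d n f p q * (p j * X^j) - coef_c n f p q * (q j * X^j)
      + 2 * \<i> * coef_b n f p q * (shiftz 1 p j * X^j) + 2 * \<i> * coef_a n f p q * (shiftz 1 q j * X^j))"
    by (rule sum.cong) (auto simp: t_rhs_f_def cutoff_le shiftz_cutoff Let_def algebra_simps)
  also have "\<dots> = coef_d n f p q * (\<Sum>j\<le>n. p j * X^j) - coef_c n f p q * (\<Sum>j\<le>n. q j * X^j)
      + 2 * \<i> * coef_b n f p q * (\<Sum>j\<le>n. shiftz 1 p j * X^j) + 2 * \<i> * coef_a n f p q * (\<Sum>j\<le>n. shiftz 1 q j * X^j)"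
    by (simp add: sum.distrib sum_subtractf sum_distrib_left)
  finally show ?thesis by (simp only: sum_shift1)
qed

lemma t_DP: "(\<Sum>l\<le>n. t_rhs_psi n f p q l * X^l) =
   - 2 * coef_c n f p q * (\<Sum>j\<le>n. f j * X^j)
   + 4 * \<i> * coef_a n f p q * (X * ((\<Sum>l\<le>n. f l * X^l) - f n * X^n))
   + 2 * \<i> * coef_a n f p q * coef_b n f p q * (\<Sum>j\<le>n. p j * X^j)
   - 4 * \<i> * (X * (X * ((\<Sum>l\<le>n. p l * X^l) - p n * X^n) - shiftz 1 p n * X^n))"
proof -
  have "(\<Sum>l\<le>n. t_rhs_psi n f p q l * X^l) = (\<Sum>l\<le>n. - 2 * coef_c n f p q * (f l * X^l)
      + 4 * \<i> * coef_a n f p q * (shiftz 1 f l * X^l) + 2 * \<i> * coef_a n f p q * coef_b n f p q * (p l * X^l)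
      - 4 * \<i> * (shiftz 2 p l * X^l))"
    by (rule sum.cong) (auto simp: t_rhs_psi_def cutoff_le shiftz_cutoff shiftz_cutoff_Suc Let_def algebra_simps)
  also have "\<dots> = - 2 * coef_c n f p q * (\<Sum>j\<le>n. f j * X^j)
      + 4 * \<i> * coef_a n f p q * (\<Sum>l\<le>n. shiftz 1 f l * X^l) + 2 * \<i> * coef_a n f p q * coef_b n f p q * (\<Sum>j\<le>n. p j * X^j)
      - 4 * \<i> * (\<Sum>l\<le>n. shiftz 2 p l * X^l)"
    by (simp add: sum.distrib sum_subtractf sum_distrib_left sum_negf)
  finally show ?thesis by (simp only: sum_shift1 sum_shift2)
qed

lemma t_DQ: "(\<Sum>l\<le>n. t_rhs_phi n f p q l * X^l) =
   2 * coef_d n f p q * (\<Sum>j\<le>n. f j * X^j)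
   + 4 * \<i> * coef_b n f p q * (X * ((\<Sum>l\<le>n. f l * X^l) - f n * X^n))
   - 2 * \<i> * coef_a n f p q * coef_b n f p q * (\<Sum>j\<le>n. q j * X^j)
   + 4 * \<i> * (X * (X * ((\<Sum>l\<le>n. q l * X^l) - q n * X^n) - shiftz 1 q n * X^n))"
proof -
  have "(\<Sum>l\<le>n. t_rhs_phi n f p q l * X^l) = (\<Sum>l\<le>n. 2 * coef_d n f p q * (f l * X^l)
      + 4 * \<i> * coef_b n f p q * (shiftz 1 f l * X^l) - 2 * \<i> * coef_a n f p q * coef_b n f p q * (q l * X^l)
      + 4 * \<i> * (shiftz 2 q l * X^l))"
    by (rule sum.cong) (auto simp: t_rhs_phi_def cutoff_le shiftz_cutoff shiftz_cutoff_Suc Let_def algebra_simps)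
  also have "\<dots> = 2 * coef_d n f p q * (\<Sum>j\<le>n. f j * X^j)
      + 4 * \<i> * coef_b n f p q * (\<Sum>l\<le>n. shiftz 1 f l * X^l) - 2 * \<i> * coef_a n f p q * coef_b n f p q * (\<Sum>j\<le>n. q j * X^j)
      + 4 * \<i> * (\<Sum>l\<le>n. shiftz 2 q l * X^l)"
    by (simp add: sum.distrib sum_subtractf sum_distrib_left sum_negf)
  finally show ?thesis by (simp only: sum_shift1 sum_shift2)
qed

lemma t_identity:
  fixes f p q :: "nat \<Rightarrow> complex" and X :: complex
  assumes c: "f (Suc n) \<noteq> 0"
  shows "2 * ((\<Sum>j\<le>n. f j * X^j) + f (Suc n) * X^Suc n) * (\<Sum>j\<le>n. t_rhs_f n f p q j * X^j)
     - (\<Sum>l\<le>n. t_rhs_psi n f p q l * X^l) * (\<Sum>l\<le>n. q l * X^l)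
     - (\<Sum>l\<le>n. p l * X^l) * (\<Sum>l\<le>n. t_rhs_phi n f p q l * X^l) = 0"
proof -
  define S where "S = (\<Sum>j\<le>n. f j * X^j)"
  define Ps where "Ps = (\<Sum>j\<le>n. p j * X^j)"
  define Qs where "Qs = (\<Sum>j\<le>n. q j * X^j)"
  define N where "N = X^n"
  define A where "A = coef_a n f p q"
  define B where "B = coef_b n f p q"
  define C where "C = coef_c n f p q"
  define D where "D = coef_d n f p q"
  define cc where "cc = f (Suc n)"
  have XS: "X^Suc n = X * N" by (simp add: N_def)
  have pn: "p n = A * cc" using c by (simp add: A_def cc_def coef_a_def)
  have qn: "q n = - B * cc" using c by (simp add: B_def cc_def coef_b_def)
  have pp: "shiftz 1 p n = A * f n + \<i> * cc * C / 2"
    using c by (simp add: A_def C_def cc_def coef_a_def coef_c_def field_simps power2_eq_square)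
  have qp: "shiftz 1 q n = - B * f n + \<i> * cc * D / 2"
    using c by (simp add: B_def D_def cc_def coef_b_def coef_d_def field_simps power2_eq_square)
  show ?thesis
    unfolding t_DF t_DP t_DQ S_def[symmetric] Ps_def[symmetric] Qs_def[symmetric] N_def[symmetric] XS
      A_def[symmetric] B_def[symmetric] C_def[symmetric] D_def[symmetric] cc_def[symmetric] pn qn pp qp
    by (simp add: algebra_simps)
qed


lemma cons_from_id:
  fixes rF rP rQ :: rhs
  assumes symQ: "\<And>u l. rQ (Fv n c0 u) (Pv n u) (Qv n u) l = - cnj (rP (Fv n c0 u) (Pv n u) (Qv n u) l)"
    and idt: "\<And>u X. 2 * Fpoly n c0 u X * dFp n c0 rF u X - dPp n c0 rP u X * (\<Sum>l\<le>n. Qv n u l * X^l)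
        - Ppoly n u X * (\<Sum>l\<le>n. rQ (Fv n c0 u) (Pv n u) (Qv n u) l * X^l) = 0"
  shows "2 * Fpoly n c0 u (of_real x) * dFp n c0 rF u (of_real x)
        + dPp n c0 rP u (of_real x) * cnj (Ppoly n u (of_real x))
        + Ppoly n u (of_real x) * cnj (dPp n c0 rP u (of_real x)) = 0"
proof -
  let ?X = "complex_of_real x"
  have e1: "(\<Sum>l\<le>n. Qv n u l * ?X^l) = - cnj (Ppoly n u ?X)"
    by (simp add: Ppoly_def Qv_def cnj_sum sum_negf)
  have e2: "(\<Sum>l\<le>n. rQ (Fv n c0 u) (Pv n u) (Qv n u) l * ?X^l) = - cnj (dPp n c0 rP u ?X)"
    by (simp add: dPp_def symQ cnj_sum sum_negf)
  show ?thesis using idt[of u ?X] unfolding e1 e2 by (simp add: algebra_simps)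
qed

lemma Fpoly_eq: "Fpoly n c0 u X = (\<Sum>j\<le>n. Fv n c0 u j * X^j) + Fv n c0 u (Suc n) * X^Suc n"
  by (simp add: Fpoly_def)

lemmas LB_rules = LB_add LB_diff LB_mult LB_minus LB_div_const LB_power2 LB_if LB_Fv LB_Pv LB_Qv LB_const

lemma x_LBF: "LB (\<lambda>u. x_rhs_f n (Fv n c0 u) (Pv n u) (Qv n u) j)"
  unfolding x_rhs_f_def coef_a_def coef_b_def cutoff_def Let_def Fv_Suc by (intro LB_rules)
lemma x_LBP: "LB (\<lambda>u. x_rhs_psi n (Fv n c0 u) (Pv n u) (Qv n u) j)"
  unfolding x_rhs_psi_def coef_a_def coef_b_def cutoff_def shiftz_def Let_def Fv_Suc by (intro LB_rules)
lemma x_realF: "cnj (x_rhs_f n (Fv n c0 u) (Pv n u) (Qv n u) j) = x_rhs_f n (Fv n c0 u) (Pv n u) (Qv n u) j"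
  by (simp add: x_rhs_f_def coef_a_def coef_b_def cutoff_def Qv_def Let_def algebra_simps)
lemma x_symQ: "x_rhs_phi n (Fv n c0 u) (Pv n u) (Qv n u) l = - cnj (x_rhs_psi n (Fv n c0 u) (Pv n u) (Qv n u) l)"
  by (simp add: x_rhs_phi_def x_rhs_psi_def coef_a_def coef_b_def cutoff_def shiftz_def Qv_def Let_def algebra_simps)
lemma x_topF: "x_rhs_f n (Fv n c0 u) (Pv n u) (Qv n u) (Suc n) = 0"
  by (simp add: x_rhs_f_def cutoff_def Let_def)
lemma x_cons:
  assumes "c0 \<noteq> 0"
  shows "2 * Fpoly n c0 u (of_real x) * dFp n c0 (x_rhs_f n) u (of_real x)
        + dPp n c0 (x_rhs_psi n) u (of_real x) * cnj (Ppoly n u (of_real x))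
        + Ppoly n u (of_real x) * cnj (dPp n c0 (x_rhs_psi n) u (of_real x)) = 0"
proof (rule cons_from_id[where rQ = "x_rhs_phi n"])
  show "\<And>u l. x_rhs_phi n (Fv n c0 u) (Pv n u) (Qv n u) l = - cnj (x_rhs_psi n (Fv n c0 u) (Pv n u) (Qv n u) l)"
    by (rule x_symQ)
  fix u X
  show "2 * Fpoly n c0 u X * dFp n c0 (x_rhs_f n) u X - dPp n c0 (x_rhs_psi n) u X * (\<Sum>l\<le>n. Qv n u l * X^l)
        - Ppoly n u X * (\<Sum>l\<le>n. x_rhs_phi n (Fv n c0 u) (Pv n u) (Qv n u) l * X^l) = 0"
    unfolding Fpoly_eq dFp_def dPp_def Ppoly_def
    by (rule x_identity) (simp add: assms)
qed

lemma t_LBF: "LB (\<lambda>u. t_rhs_f n (Fv n c0 u) (Pv n u) (Qv n u) j)"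
  unfolding t_rhs_f_def coef_a_def coef_b_def coef_c_def coef_d_def cutoff_def shiftz_def Let_def Fv_Suc by (intro LB_rules)
lemma t_LBP: "LB (\<lambda>u. t_rhs_psi n (Fv n c0 u) (Pv n u) (Qv n u) j)"
  unfolding t_rhs_psi_def coef_a_def coef_b_def coef_c_def coef_d_def cutoff_def shiftz_def Let_def Fv_Suc by (intro LB_rules)
lemma t_realF: "cnj (t_rhs_f n (Fv n c0 u) (Pv n u) (Qv n u) j) = t_rhs_f n (Fv n c0 u) (Pv n u) (Qv n u) j"
  by (simp add: t_rhs_f_def coef_a_def coef_b_def coef_c_def coef_d_def cutoff_def shiftz_def Qv_def Let_def algebra_simps)
lemma t_symQ: "t_rhs_phi n (Fv n c0 u) (Pv n u) (Qv n u) l = - cnj (t_rhs_psi n (Fv n c0 u) (Pv n u) (Qv n u) l)"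
  by (simp add: t_rhs_phi_def t_rhs_psi_def coef_a_def coef_b_def coef_c_def coef_d_def cutoff_def shiftz_def Qv_def Let_def algebra_simps)
lemma t_topF: "t_rhs_f n (Fv n c0 u) (Pv n u) (Qv n u) (Suc n) = 0"
  by (simp add: t_rhs_f_def coef_a_def coef_b_def cutoff_def shiftz_def Let_def algebra_simps)
lemma t_cons:
  assumes "c0 \<noteq> 0"
  shows "2 * Fpoly n c0 u (of_real x) * dFp n c0 (t_rhs_f n) u (of_real x)
        + dPp n c0 (t_rhs_psi n) u (of_real x) * cnj (Ppoly n u (of_real x))
        + Ppoly n u (of_real x) * cnj (dPp n c0 (t_rhs_psi n) u (of_real x)) = 0"
proof (rule cons_from_id[where rQ = "t_rhs_phi n"])
  show "\<And>u l. t_rhs_phi n (Fv n c0 u) (Pv n u) (Qv n u) l = - cnj (t_rhs_psi n (Fv n c0 u) (Pv n u) (Qv n u) l)"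
    by (rule t_symQ)
  fix u X
  show "2 * Fpoly n c0 u X * dFp n c0 (t_rhs_f n) u X - dPp n c0 (t_rhs_psi n) u X * (\<Sum>l\<le>n. Qv n u l * X^l)
        - Ppoly n u X * (\<Sum>l\<le>n. t_rhs_phi n (Fv n c0 u) (Pv n u) (Qv n u) l * X^l) = 0"
    unfolding Fpoly_eq dFp_def dPp_def Ppoly_def
    by (rule t_identity) (simp add: assms)
qed


theorem lemma2:
  fixes n :: nat and f0 psi0 phi0 :: "nat \<Rightarrow> complex"
  assumes "f0 (Suc n) \<noteq> 0"
    and "\<forall>j\<le>Suc n. cnj (f0 j) = f0 j"
    and "\<forall>l\<le>n. phi0 l = - cnj (psi0 l)"
  shows "(\<exists>F P Q. global_solution n (t_rhs_f n) (t_rhs_psi n) (t_rhs_phi n) f0 psi0 phi0 F P Q \<and>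
            (\<forall>t. (\<forall>j\<le>Suc n. cnj (F t j) = F t j) \<and> (\<forall>l\<le>n. Q t l = - cnj (P t l))))
       \<and> (\<exists>F P Q. global_solution n (x_rhs_f n) (x_rhs_psi n) (x_rhs_phi n) f0 psi0 phi0 F P Q \<and>
            (\<forall>x. (\<forall>j\<le>Suc n. cnj (F x j) = F x j) \<and> (\<forall>l\<le>n. Q x l = - cnj (P x l))))"
proof -
  define c0 where "c0 = Re (f0 (Suc n))"
  have f0top: "f0 (Suc n) = complex_of_real c0"
    unfolding c0_def using assms(2) by (intro real_of_cnj[symmetric]) simp
  have c0: "c0 \<noteq> 0" using assms(1) f0top by auto
  show ?thesis
  proof
    show "\<exists>F P Q. global_solution n (t_rhs_f n) (t_rhs_psi n) (t_rhs_phi n) f0 psi0 phi0 F P Q \<and>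
            (\<forall>t. (\<forall>j\<le>Suc n. cnj (F t j) = F t j) \<and> (\<forall>l\<le>n. Q t l = - cnj (P t l)))"
      by (rule generic[OF t_LBF t_LBP t_realF t_symQ t_topF t_cons[OF c0] f0top assms(2) assms(3) c0])
    show "\<exists>F P Q. global_solution n (x_rhs_f n) (x_rhs_psi n) (x_rhs_phi n) f0 psi0 phi0 F P Q \<and>
            (\<forall>x. (\<forall>j\<le>Suc n. cnj (F x j) = F x j) \<and> (\<forall>l\<le>n. Q x l = - cnj (P x l)))"
      by (rule generic[OF x_LBF x_LBP x_realF x_symQ x_topF x_cons[OF c0] f0top assms(2) assms(3) c0])
  qed
qed


end
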